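(* Let $S$ be finite, $\Gamma$ countable, $X\subset S^\Gamma$ closed, $\mathbb G$ a countable Abelian group and $G:S\to\mathbb G$. Let $\mathbb H$ be the subgroup of $\mathbb G$ generated by $\{\Psi_G(x,y):(x,y)\in\mathfrak T(X)\}$, and suppose that the skew product relation $\mathfrak T(X)_{\Psi_G}$ is topologically transitive on $X\times\mathbb H$. If $p$ is a Borel probability on $X$ which is $\mathfrak T(X)$-nonsingular, $\mathfrak T(X)[\Psi_G]$-invariant and $\mathfrak T(X)[\Psi_G]$-ergodic, then $p$ is site conformal.
   Context: Tail relation: $\mathfrak T(X)=\{(x,y)\in X\times X:\exists F\subset\Gamma\text{ finite},\ x_{\Gamma\setminus F}=y_{\Gamma\setminus F}\}$. For $(x,y)\in\mathfrak T(X)$, $\Psi_G(x,y)=\sum_{j\in\Gamma}(G(y_j)-G(x_j))$ (finite sum); $\mathfrak T(X)[\Psi_G]=\{(x,y)\in\mathfrak T(X):\Psi_G(x,y)=0\}$. The skew product relation is $\mathfrak T(X)_{\Psi_G}=\{((x,t),(y,s))\in(X\times\mathbb H)^2:(x,y)\in\mathfrak T(X),\ t-s=\Psi_G(x,y)\}$; it is topologically transitive on $X\times\mathbb H$ ($\mathbb H$ discrete) if it meets $U\times V$ for all nonempty open $U,V\subset X\times\mathbb H$. Measure notions for a countable Borel equivalence relation $\mathcal R$: nonsingular ($p(A)=0\Rightarrow p(\mathcal R(A))=0$), invariant (nonsingular and preserved by every Borel bijection $\Phi:B\to C$ with graph in $\mathcal R$), ergodic (every $\mathcal R$-saturated Borel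 set has measure $0$ or $1$). $p$ is site conformal if there is $g:S\to\mathbb R$ such that $p$ is $\mathfrak T(X)$-nonsingular and for every Borel bijection $\Phi:B\to C$ with $(x,\Phi(x))\in\mathfrak T(X)$, $\frac{dp\circ\Phi}{dp}(x)=\exp\big(\sum_{j\in\Gamma}(g(\Phi(x)_j)-g(x_j))\big)$ for $p$-a.e. $x\in B$. *)

theory Defs
  imports "HOL-Probability.Probability"
begin

definition conf_top :: "('g \<Rightarrow> 's) topology" where
  "conf_top = product_topology (\<lambda>_. discrete_topology UNIV) UNIV"

definition borel_of :: "'a topology \<Rightarrow> 'a measure" where
  "borel_of T = sigma (topspace T) {U. openin T U}"

definition tail_rel :: "('g \<Rightarrow> 's) set \<Rightarrow> (('g \<Rightarrow> 's) \<times> ('g \<Rightarrow> 's)) set" where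
  "tail_rel X = {(x, y). x \<in> X \<and> y \<in> X \<and> finite {j. x j \<noteq> y j}}"

text \<open>Psi_G(x,y) = sum over j of G(y_j) - G(x_j); only sites where x and y differ contribute.\<close>
definition Psi :: "('s \<Rightarrow> 'a::ab_group_add) \<Rightarrow> ('g \<Rightarrow> 's) \<Rightarrow> ('g \<Rightarrow> 's) \<Rightarrow> 'a" where
  "Psi G x y = (\<Sum>j\<in>{j. x j \<noteq> y j}. G (y j) - G (x j))"

definition tail_rel_Psi :: "('g \<Rightarrow> 's) set \<Rightarrow> ('s \<Rightarrow> 'a::ab_group_add) \<Rightarrow> (('g \<Rightarrow> 's) \<times> ('g \<Rightarrow> 's)) set" where
  "tail_rel_Psi X G = {(x, y) \<in> tail_rel X. Psi G x y = 0}"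

inductive_set subgroup_generated :: "'a::ab_group_add set \<Rightarrow> 'a set" for A where
  gen: "a \<in> A \<Longrightarrow> a \<in> subgroup_generated A"
| zero: "0 \<in> subgroup_generated A"
| add: "a \<in> subgroup_generated A \<Longrightarrow> b \<in> subgroup_generated A \<Longrightarrow> a + b \<in> subgroup_generated A"
| neg: "a \<in> subgroup_generated A \<Longrightarrow> - a \<in> subgroup_generated A"

definition skew_rel :: "('g \<Rightarrow> 's) set \<Rightarrow> ('s \<Rightarrow> 'a::ab_group_add)
    \<Rightarrow> ((('g \<Rightarrow> 's) \<times> 'a) \<times> (('g \<Rightarrow> 's) \<times> 'a)) set" where
  "skew_rel X G = {((x, t), (y, s)). (x, y) \<in> tail_rel X \<and> t - s = Psi G x y}"

definition top_transitive :: "'a topology \<Rightarrow> ('a \<times> 'a) set \<Rightarrow> bool" where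
  "top_transitive T R \<longleftrightarrow>
     (\<forall>U V. openin T U \<longrightarrow> openin T V \<longrightarrow> U \<noteq> {} \<longrightarrow> V \<noteq> {} \<longrightarrow> R \<inter> (U \<times> V) \<noteq> {})"

definition borel_bij :: "'a measure \<Rightarrow> ('a \<Rightarrow> 'a) \<Rightarrow> 'a set \<Rightarrow> 'a set \<Rightarrow> bool" where
  "borel_bij M \<Phi> B C \<longleftrightarrow> B \<in> sets M \<and> C \<in> sets M \<and> bij_betw \<Phi> B C \<and>
     \<Phi> \<in> measurable (restrict_space M B) (restrict_space M C) \<and>
     the_inv_into B \<Phi> \<in> measurable (restrict_space M C) (restrict_space M B)"

definition nonsingular :: "'a measure \<Rightarrow> ('a \<times> 'a) set \<Rightarrow> bool" where
  "nonsingular M R \<longleftrightarrow> (\<forall>A \<in> null_sets M. R `` A \<in> null_sets M)"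

definition invariant :: "'a measure \<Rightarrow> ('a \<times> 'a) set \<Rightarrow> bool" where
  "invariant M R \<longleftrightarrow> nonsingular M R \<and>
     (\<forall>\<Phi> B C. borel_bij M \<Phi> B C \<longrightarrow> (\<forall>x\<in>B. (x, \<Phi> x) \<in> R) \<longrightarrow>
        (\<forall>A \<in> sets M. A \<subseteq> B \<longrightarrow> emeasure M (\<Phi> ` A) = emeasure M A))"

definition ergodic :: "'a measure \<Rightarrow> ('a \<times> 'a) set \<Rightarrow> bool" where
  "ergodic M R \<longleftrightarrow>
     (\<forall>A \<in> sets M. R `` A \<subseteq> A \<longrightarrow> emeasure M A = 0 \<or> emeasure M A = 1)"

text \<open>Site conformality: the Radon-Nikodym derivative d(p o Phi)/dp on B equals
  exp(Psi_g(x, Phi x)) p-a.e.; expressed via the defining property of the density: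
  p(Phi A) = integral over A of exp(Psi_g(x, Phi x)) for all Borel A contained in B.\<close>
definition site_conformal :: "('g \<Rightarrow> 's) set \<Rightarrow> ('g \<Rightarrow> 's) measure \<Rightarrow> bool" where
  "site_conformal X p \<longleftrightarrow> (\<exists>g :: 's \<Rightarrow> real.
     nonsingular p (tail_rel X) \<and>
     (\<forall>\<Phi> B C. borel_bij p \<Phi> B C \<longrightarrow> (\<forall>x\<in>B. (x, \<Phi> x) \<in> tail_rel X) \<longrightarrow>
        (\<forall>A \<in> sets p. A \<subseteq> B \<longrightarrow>
           emeasure p (\<Phi> ` A) = (\<integral>\<^sup>+ x \<in> A. ennreal (exp (Psi g x (\<Phi> x))) \<partial>p))))"

end

theory Submission
  imports Defs
begin

section \<open>Psi algebra\<close>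

lemma Psi_eq_sum:
  fixes G :: "'s \<Rightarrow> 'a::ab_group_add"
  assumes "finite F" "{j. x j \<noteq> y j} \<subseteq> F"
  shows "Psi G x y = (\<Sum>j\<in>F. G (y j) - G (x j))"
  unfolding Psi_def
  by (rule sum.mono_neutral_left) (use assms in auto)

lemma tail_rel_finite: "(x, y) \<in> tail_rel X \<Longrightarrow> finite {j. x j \<noteq> y j}"
  by (simp add: tail_rel_def)

lemma tail_rel_refl: "x \<in> X \<Longrightarrow> (x, x) \<in> tail_rel X"
  by (simp add: tail_rel_def)

lemma tail_rel_sym: "(x, y) \<in> tail_rel X \<Longrightarrow> (y, x) \<in> tail_rel X"
  by (simp add: tail_rel_def eq_commute)

lemma tail_rel_trans:
  assumes "(x, y) \<in> tail_rel X" "(y, z) \<in> tail_rel X"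
  shows "(x, z) \<in> tail_rel X"
proof -
  have "{j. x j \<noteq> z j} \<subseteq> {j. x j \<noteq> y j} \<union> {j. y j \<noteq> z j}" by auto
  then show ?thesis using assms unfolding tail_rel_def by (auto intro: finite_subset)
qed

lemma Psi_trans:
  fixes G :: "'s \<Rightarrow> 'a::ab_group_add"
  assumes "(x, y) \<in> tail_rel X" "(y, z) \<in> tail_rel X"
  shows "Psi G x z = Psi G x y + Psi G y z"
proof -
  define F where "F = {j. x j \<noteq> y j} \<union> {j. y j \<noteq> z j}"
  have fin: "finite F" using assms unfolding F_def tail_rel_def by auto
  have "Psi G x z = (\<Sum>j\<in>F. G (z j) - G (x j))"
    by (rule Psi_eq_sum[OF fin]) (auto simp: F_def)
  moreover have "Psi G x y = (\<Sum>j\<in>F. G (y j) - G (x j))"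
    by (rule Psi_eq_sum[OF fin]) (auto simp: F_def)
  moreover have "Psi G y z = (\<Sum>j\<in>F. G (z j) - G (y j))"
    by (rule Psi_eq_sum[OF fin]) (auto simp: F_def)
  ultimately show ?thesis by (simp add: sum.distrib[symmetric])
qed

lemma Psi_self: "Psi G x x = 0"
  by (simp add: Psi_def)

lemma Psi_sym:
  fixes G :: "'s \<Rightarrow> 'a::ab_group_add"
  assumes "(x, y) \<in> tail_rel X"
  shows "Psi G y x = - Psi G x y"
  using Psi_trans[OF assms tail_rel_sym[OF assms], of G] by (simp add: Psi_self eq_neg_iff_add_eq_0 add.commute)

section \<open>Extension of real-valued homomorphisms\<close>

definition sg :: "'a::ab_group_add set \<Rightarrow> bool" where
  "sg L \<longleftrightarrow> 0 \<in> L \<and> (\<forall>a\<in>L. \<forall>b\<in>L. a + b \<in> L) \<and> (\<forall>a\<in>L. - a \<in> L)"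

definition addh :: "('a::ab_group_add \<Rightarrow> real) \<Rightarrow> 'a set \<Rightarrow> bool" where
  "addh f L \<longleftrightarrow> (\<forall>a\<in>L. \<forall>b\<in>L. f (a + b) = f a + f b)"

primrec nmul :: "nat \<Rightarrow> 'a::ab_group_add \<Rightarrow> 'a" where
  "nmul 0 a = 0"
| "nmul (Suc n) a = a + nmul n a"

definition zmul :: "int \<Rightarrow> 'a::ab_group_add \<Rightarrow> 'a" where
  "zmul k a = (if 0 \<le> k then nmul (nat k) a else - nmul (nat (- k)) a)"

lemma nmul_add: "nmul (m + n) a = nmul m a + nmul n a"
  by (induction m) (auto simp: add.assoc)

lemma nmul_diff: "n \<le> m \<Longrightarrow> nmul (m - n) a = nmul m a - nmul n a"
  using nmul_add[of "m - n" n a] by simp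

lemma nmul_mult: "nmul (m * n) a = nmul m (nmul n a)"
  by (induction m) (auto simp: nmul_add)

lemma nmul_neg: "nmul n (- a) = - nmul n a"
  by (induction n) auto

lemma zmul_0[simp]: "zmul 0 a = 0"
  by (simp add: zmul_def)

lemma zmul_nat: "zmul (int n) a = nmul n a"
  by (simp add: zmul_def)

lemma zmul_1[simp]: "zmul 1 a = a"
  by (simp add: zmul_def)

lemma zmul_neg: "zmul (- k) a = - zmul k a"
  by (auto simp: zmul_def)

lemma zmul_add: "zmul (k + l) a = zmul k a + zmul l a"
proof -
  have *: "zmul (int m - int n) a = nmul m a - nmul n a" for m n
  proof (cases "n \<le> m")
    case True
    have "zmul (int m - int n) a = zmul (int (m - n)) a" using True by (simp add: of_nat_diff)
    also have "\<dots> = nmul (m - n) a" by (rule zmul_nat)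
    also have "\<dots> = nmul m a - nmul n a" by (rule nmul_diff[OF True])
    finally show ?thesis .
  next
    case False
    then have le: "m \<le> n" by simp
    have "zmul (int m - int n) a = zmul (- int (n - m)) a" using le by (simp add: of_nat_diff)
    also have "\<dots> = - nmul (n - m) a" by (simp add: zmul_neg zmul_nat)
    also have "\<dots> = nmul m a - nmul n a" by (simp add: nmul_diff[OF le])
    finally show ?thesis .
  qed
  show ?thesis
  proof (cases k rule: int_cases2)
    case (nonneg m)
    show ?thesis
    proof (cases l rule: int_cases2)
      case (nonneg n)
      then show ?thesis using \<open>k = int m\<close>
        by (metis nmul_add of_nat_add zmul_nat)
    next
      case (nonpos n)
      then show ?thesis using \<open>k = int m\<close> * by (simp add: zmul_neg zmul_nat)
    qed
  next
    case (nonpos m)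
    show ?thesis
    proof (cases l rule: int_cases2)
      case (nonneg n)
      then show ?thesis using \<open>k = - int m\<close> *[of n m]
        by (simp add: zmul_neg zmul_nat algebra_simps)
    next
      case (nonpos n)
      have e1: "zmul (- int m - int n) a = zmul (- int (m + n)) a" by (simp add: algebra_simps)
      also have "\<dots> = - nmul (m + n) a" by (simp only: zmul_neg zmul_nat)
      also have "\<dots> = - nmul m a - nmul n a" by (simp add: nmul_add)
      finally have e2: "zmul (- int m - int n) a = - nmul m a - nmul n a" .
      show ?thesis using \<open>k = - int m\<close> nonpos e2 by (simp add: zmul_neg zmul_nat)
    qed
  qed
qed

lemma zmul_mult: "zmul (k * l) a = zmul k (zmul l a)"
proof -
  have A: "zmul k (- b) = - zmul k b" for k and b :: 'a
    by (auto simp: zmul_def nmul_neg)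
  have B: "zmul (int m * l) a = zmul (int m) (zmul l a)" for m
    by (induction m) (auto simp: zmul_nat distrib_right zmul_add)
  show ?thesis
  proof (cases k rule: int_cases2)
    case (nonneg m) then show ?thesis using B by simp
  next
    case (nonpos m)
    then have "k * l = - (int m * l)" by simp
    then show ?thesis using B[of m] nonpos by (simp add: zmul_neg A)
  qed
qed

lemma sg_nmul: "sg L \<Longrightarrow> a \<in> L \<Longrightarrow> nmul n a \<in> L"
  by (induction n) (auto simp: sg_def)

lemma sg_zmul: "sg L \<Longrightarrow> a \<in> L \<Longrightarrow> zmul k a \<in> L"
  by (auto simp: zmul_def sg_nmul sg_def)

lemma sg_diff: "sg L \<Longrightarrow> a \<in> L \<Longrightarrow> b \<in> L \<Longrightarrow> a - b \<in> L"
  unfolding sg_def by (metis diff_conv_add_uminus)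

lemma addh_0: "sg L \<Longrightarrow> addh f L \<Longrightarrow> f 0 = 0"
  unfolding sg_def addh_def by (metis add.right_neutral add_cancel_right_right)

lemma addh_neg: "sg L \<Longrightarrow> addh f L \<Longrightarrow> a \<in> L \<Longrightarrow> f (- a) = - f a"
  using addh_0[of L f] unfolding sg_def addh_def
  by (metis add.right_inverse add_eq_0_iff)

lemma addh_diff: "sg L \<Longrightarrow> addh f L \<Longrightarrow> a \<in> L \<Longrightarrow> b \<in> L \<Longrightarrow> f (a - b) = f a - f b"
  using addh_neg[of L f b] unfolding sg_def addh_def
  by (metis diff_conv_add_uminus uminus_add_conv_diff)

lemma addh_nmul: "sg L \<Longrightarrow> addh f L \<Longrightarrow> a \<in> L \<Longrightarrow> f (nmul n a) = real n * f a"
  by (induction n) (auto simp: addh_0 addh_def sg_nmul distrib_right)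

lemma addh_zmul: "sg L \<Longrightarrow> addh f L \<Longrightarrow> a \<in> L \<Longrightarrow> f (zmul k a) = of_int k * f a"
  by (auto simp: zmul_def addh_nmul addh_neg sg_nmul)

lemma addh_sum:
  assumes "sg L" "addh f L" "finite F" "\<And>j. j \<in> F \<Longrightarrow> u j \<in> L"
  shows "f (\<Sum>j\<in>F. u j) = (\<Sum>j\<in>F. f (u j)) \<and> (\<Sum>j\<in>F. u j) \<in> L"
  using assms(3,4)
proof (induction F rule: finite_induct)
  case empty then show ?case using assms addh_0 by (auto simp: sg_def)
next
  case (insert x F)
  then show ?case using assms by (auto simp: addh_def sg_def)
qed

lemma extend_step:
  fixes L :: "'a::ab_group_add set"
  assumes L: "sg L" and f: "addh f L"
  shows "\<exists>L' f'. sg L' \<and> L \<subseteq> L' \<and> a \<in> L' \<and> addh f' L' \<and> (\<forall>x\<in>L. f' x = f x)"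
proof -
  define I where "I = {k::int. zmul k a \<in> L}"
  have I0: "0 \<in> I" using L by (simp add: I_def sg_def)
  have Ineg: "k \<in> I \<Longrightarrow> - k \<in> I" for k using L by (auto simp: I_def zmul_neg sg_def)
  have Iadd: "k \<in> I \<Longrightarrow> l \<in> I \<Longrightarrow> k + l \<in> I" for k l using L by (auto simp: I_def zmul_add sg_def)
  have "\<exists>t::real. \<forall>k\<in>I. f (zmul k a) = of_int k * t"
  proof (cases "\<exists>n\<in>I. n > 0")
    case False
    then have "I = {0}" using I0 Ineg by (metis linorder_neqE_linordered_idom neg_0_less_iff_less singletonI subsetI subset_antisym
        singletonD)
    then show ?thesis using addh_0[OF L f] by auto
  next
    case True
    define N where "N = (LEAST n::nat. int n \<in> I \<and> n > 0)"
    define n0 where "n0 = int N"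
    from True obtain m where m: "m \<in> I" "m > 0" by blast
    have exN: "\<exists>n::nat. int n \<in> I \<and> n > 0" using m by (intro exI[of _ "nat m"]) auto
    have n0: "n0 \<in> I \<and> n0 > 0"
      unfolding n0_def N_def using LeastI_ex[OF exN] by simp
    have n0min: "n \<in> I \<Longrightarrow> n > 0 \<Longrightarrow> n0 \<le> n" for n
    proof -
      assume "n \<in> I" "n > 0"
      then have "N \<le> nat n" unfolding N_def by (intro Least_le) simp
      then show ?thesis using \<open>n > 0\<close> by (simp add: n0_def)
    qed
    show ?thesis
    proof (intro exI ballI)
      fix k assume k: "k \<in> I"
      have mul: "q * n0 \<in> I" for q
      proof -
        have "zmul (q * n0) a = zmul q (zmul n0 a)" by (rule zmul_mult)
        then show ?thesis using sg_zmul[OF L, of "zmul n0 a" q] n0 by (simp add: I_def)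
      qed
      have "k mod n0 = k - (k div n0) * n0" by (simp add: minus_div_mult_eq_mod)
      then have "k mod n0 \<in> I" using Iadd[OF k Ineg[OF mul[of "k div n0"]]] by simp
      moreover have "0 \<le> k mod n0" "k mod n0 < n0" using n0 by auto
      ultimately have "k mod n0 = 0" using n0min by fastforce
      then have kq: "k = (k div n0) * n0" using div_mult_mod_eq[of k n0] by linarith
      have "f (zmul k a) = f (zmul (k div n0) (zmul n0 a))"
        by (subst kq, subst zmul_mult) rule
      also have "\<dots> = of_int (k div n0) * f (zmul n0 a)"
        using n0 by (intro addh_zmul[OF L f]) (simp add: I_def)
      also have "\<dots> = of_int k * (f (zmul n0 a) / of_int n0)"
        using n0 by (subst (2) kq) (simp add: field_simps)
      finally show "f (zmul k a) = of_int k * (f (zmul n0 a) / of_int n0)" .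
    qed
  qed
  then obtain t :: real where t: "\<And>k. k \<in> I \<Longrightarrow> f (zmul k a) = of_int k * t" by blast
  define L' where "L' = {l + zmul k a | l k. l \<in> L}"
  define f' where "f' z = (SOME v. \<exists>l k. l \<in> L \<and> z = l + zmul k a \<and> v = f l + of_int k * t)" for z
  have wd: "f l + of_int k * t = f l' + of_int k' * t"
    if "l \<in> L" "l' \<in> L" "l + zmul k a = l' + zmul k' a" for l l' k k'
  proof -
    have z: "zmul (k - k') a = zmul k a - zmul k' a" using zmul_add[of k "- k'" a] zmul_neg[of k' a] by simp
    have "l' = l + zmul k a - zmul k' a" using that(3) by (metis add_diff_cancel_right')
    then have "zmul (k - k') a = l' - l" by (subst z) (simp add: algebra_simps)
    then have "k - k' \<in> I" using sg_diff[OF L that(2,1)] by (simp add: I_def)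
    then have "f (l' - l) = of_int (k - k') * t" using t \<open>zmul (k - k') a = l' - l\<close> by metis
    then show ?thesis using addh_diff[OF L f that(2,1)] by (simp add: algebra_simps)
  qed
  have f'eq: "f' (l + zmul k a) = f l + of_int k * t" if "l \<in> L" for l k
  proof -
    have "\<exists>l' k'. l' \<in> L \<and> l + zmul k a = l' + zmul k' a \<and> f l + of_int k * t = f l' + of_int k' * t"
      using that by blast
    then have ex: "\<exists>v. \<exists>l' k'. l' \<in> L \<and> l + zmul k a = l' + zmul k' a \<and> v = f l' + of_int k' * t"
      by metis
    from someI_ex[OF ex] obtain l' k' where
      "l' \<in> L" "l + zmul k a = l' + zmul k' a" "f' (l + zmul k a) = f l' + of_int k' * t"
      unfolding f'_def by blast
    then show ?thesis using wd[OF that] by metis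
  qed
  show ?thesis
  proof (intro exI conjI)
    show "sg L'" unfolding sg_def L'_def
    proof (intro conjI ballI)
      show "0 \<in> {l + zmul k a |l k. l \<in> L}" using L by (auto simp: sg_def intro!: exI[of _ 0])
    next
      fix x y assume "x \<in> {l + zmul k a |l k. l \<in> L}" "y \<in> {l + zmul k a |l k. l \<in> L}"
      then obtain l1 k1 l2 k2 where "x = l1 + zmul k1 a" "y = l2 + zmul k2 a" "l1 \<in> L" "l2 \<in> L" by blast
      then show "x + y \<in> {l + zmul k a |l k. l \<in> L}" using L
        by (auto simp: sg_def zmul_add algebra_simps intro!: exI[of _ "l1 + l2"] exI[of _ "k1 + k2"])
    next
      fix x assume "x \<in> {l + zmul k a |l k. l \<in> L}"
      then obtain l1 k1 where "x = l1 + zmul k1 a" "l1 \<in> L" by blast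
      then show "- x \<in> {l + zmul k a |l k. l \<in> L}" using L
        by (auto simp: sg_def zmul_neg intro!: exI[of _ "- l1"] exI[of _ "- k1"])
    qed
  next
    show "L \<subseteq> L'"
    proof
      fix x assume "x \<in> L"
      then have "x = x + zmul 0 a \<and> x \<in> L" by simp
      then show "x \<in> L'" unfolding L'_def by blast
    qed
  next
    show "a \<in> L'" unfolding L'_def using L
      by (auto simp: sg_def zmul_nat intro!: exI[of _ 0] exI[of _ 1])
  next
    show "addh f' L'" unfolding addh_def L'_def
    proof (intro ballI)
      fix x y assume "x \<in> {l + zmul k a |l k. l \<in> L}" "y \<in> {l + zmul k a |l k. l \<in> L}"
      then obtain l1 k1 l2 k2 where xy: "x = l1 + zmul k1 a" "y = l2 + zmul k2 a" "l1 \<in> L" "l2 \<in> L" by blast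
      have "x + y = (l1 + l2) + zmul (k1 + k2) a" using xy by (simp add: zmul_add algebra_simps)
      moreover have "l1 + l2 \<in> L" using L xy by (auto simp: sg_def)
      ultimately have "f' (x + y) = f (l1 + l2) + of_int (k1 + k2) * t" using f'eq by simp
      also have "\<dots> = f' x + f' y" using xy f'eq f
        by (simp add: addh_def algebra_simps)
      finally show "f' (x + y) = f' x + f' y" .
    qed
  next
    show "\<forall>x\<in>L. f' x = f x" using f'eq[of _ 0] by simp
  qed
qed

lemma extend_finite:
  fixes R :: "'a::ab_group_add set"
  assumes R: "sg R" and phi: "addh \<phi> R" and A: "finite A"
  shows "\<exists>L f. sg L \<and> R \<subseteq> L \<and> A \<subseteq> L \<and> addh f L \<and> (\<forall>x\<in>R. f x = \<phi> x)"
  using A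
proof (induction A rule: finite_induct)
  case empty then show ?case using R phi by blast
next
  case (insert a A)
  then obtain L f where Lf: "sg L" "R \<subseteq> L" "A \<subseteq> L" "addh f L" "\<forall>x\<in>R. f x = \<phi> x" by blast
  from extend_step[OF Lf(1,4), of a] obtain L' f' where
    "sg L'" "L \<subseteq> L'" "a \<in> L'" "addh f' L'" "\<forall>x\<in>L. f' x = f x" by blast
  then show ?case using Lf by (intro exI[of _ L'] exI[of _ f']) auto
qed


lemma topspace_conf_top[simp]: "topspace (conf_top :: ('g \<Rightarrow> 's) topology) = UNIV"
  by (simp add: conf_top_def topspace_product_topology)

lemma cyl_open: "openin (conf_top :: ('g \<Rightarrow> 's) topology) {x. x j = s}"
proof -
  have "continuous_map conf_top (discrete_topology (UNIV::'s set)) (\<lambda>x::'g \<Rightarrow> 's. x j)"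
    unfolding conf_top_def by (rule continuous_map_product_projection) simp
  from openin_continuous_map_preimage[OF this, of "{s}"] show ?thesis by simp
qed

definition sw :: "'g set \<Rightarrow> ('g \<Rightarrow> 's) \<Rightarrow> ('g \<Rightarrow> 's) \<Rightarrow> ('g \<Rightarrow> 's)" where
  "sw F v x = (\<lambda>j. if j \<in> F then v j else x j)"

lemma sw_cont: "continuous_map conf_top conf_top (sw F v)"
  unfolding conf_top_def sw_def continuous_map_componentwise_UNIV
proof
  fix k
  show "continuous_map (product_topology (\<lambda>_. discrete_topology UNIV) UNIV) (discrete_topology UNIV)
          (\<lambda>x. if k \<in> F then v k else x k)"
    by (cases "k \<in> F") (auto intro: continuous_map_product_projection)
qed

locale SC =
  fixes X :: "('g::countable \<Rightarrow> 's::finite) set"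
    and G :: "'s \<Rightarrow> 'a::{ab_group_add, countable}"
    and p :: "('g \<Rightarrow> 's) measure"
  assumes X_closed: "closedin conf_top X"
    and prob: "prob_space p"
    and borel: "sets p = sets (borel_of (subtopology conf_top X))"
    and space: "space p = X"
    and nonsing: "nonsingular p (tail_rel X)"
    and inv: "invariant p (tail_rel_Psi X G)"
    and erg: "ergodic p (tail_rel_Psi X G)"
begin

interpretation P: prob_space p by (rule prob)

lemma sets_p: "sets p = sigma_sets X {U. openin (subtopology conf_top X) U}"
proof -
  have "{U. openin (subtopology conf_top X) U} \<subseteq> Pow X"
    by (auto dest!: openin_subset)
  then show ?thesis unfolding borel borel_of_def by (simp add: sets_measure_of)
qed

lemma open_meas: "openin (subtopology conf_top X) U \<Longrightarrow> U \<in> sets p"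
  unfolding sets_p by (auto intro: sigma_sets.Basic)

lemma closed_meas: "closedin (subtopology conf_top X) U \<Longrightarrow> U \<in> sets p"
proof -
  assume "closedin (subtopology conf_top X) U"
  then have "openin (subtopology conf_top X) (X - U)" and "U \<subseteq> X"
    by (auto simp: closedin_def dest: closedin_subset)
  then have "X - (X - U) \<in> sets p" using open_meas sets_p
    by (metis sigma_sets.Compl)
  then show ?thesis using \<open>U \<subseteq> X\<close> by (simp add: Diff_Diff_Int inf.absorb2)
qed

lemma X_sets: "X \<in> sets p"
  using sets.top[of p] space by simp

lemma sets_subX: "A \<in> sets p \<Longrightarrow> A \<subseteq> X"
  using sets.sets_into_space[of A p] space by auto

lemma sets_restr: "D \<in> sets p \<Longrightarrow> (A \<in> sets (restrict_space p D)) \<longleftrightarrow> (A \<subseteq> D \<and> A \<in> sets p)"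
  using sets_subX[of D] by (subst sets_restrict_space_iff) (auto simp: space Int_absorb2)

lemma space_restr: "D \<in> sets p \<Longrightarrow> space (restrict_space p D) = D"
  using sets_subX[of D] by (auto simp: space space_restrict_space)

lemma S_Int_space: "S \<in> sets p \<Longrightarrow> S \<inter> space p \<in> sets p"
  using sets_subX[of S] by (simp add: space Int_absorb2)

lemma nn_restr: "S \<in> sets p \<Longrightarrow> (\<integral>\<^sup>+x. f x \<partial>restrict_space p S) = (\<integral>\<^sup>+x. f x * indicator S x \<partial>p)"
  by (rule nn_integral_restrict_space[OF S_Int_space])

lemma em_restr: "S \<in> sets p \<Longrightarrow> A \<subseteq> S \<Longrightarrow> emeasure (restrict_space p S) A = emeasure p A"
  by (rule emeasure_restrict_space[OF S_Int_space])

lemma AE_restr: "S \<in> sets p \<Longrightarrow> (AE x in restrict_space p S. P x) \<longleftrightarrow> (AE x in p. x \<in> S \<longrightarrow> P x)"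
  by (rule AE_restrict_space_iff[OF S_Int_space])

lemma preimX_meas:
  assumes f: "continuous_map conf_top conf_top f"
  shows "{x\<in>X. f x \<in> X} \<in> sets p"
proof -
  have "closedin conf_top {x \<in> topspace conf_top. f x \<in> X}"
    by (rule closedin_continuous_map_preimage[OF f X_closed])
  then have "closedin (subtopology conf_top X) ({x. f x \<in> X} \<inter> X)"
    by (auto simp: closedin_subtopology)
  then show ?thesis using closed_meas by (simp add: Collect_conj_eq Int_commute Collect_mem_eq)
qed

lemma preim_meas:
  assumes f: "continuous_map conf_top conf_top f" and A: "A \<in> sets p"
  shows "{x\<in>X. f x \<in> A} \<in> sets p"
proof -
  have "A \<in> sigma_sets X {U. openin (subtopology conf_top X) U}" using A sets_p by simp
  then show ?thesis
  proof (induction rule: sigma_sets.induct)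
    case (Basic a)
    then obtain U where U: "openin conf_top U" "a = U \<inter> X" by (auto simp: openin_subtopology)
    have o: "openin conf_top {x \<in> topspace conf_top. f x \<in> U}"
      by (rule openin_continuous_map_preimage[OF f U(1)])
    have "openin (subtopology conf_top X) ({x. f x \<in> U} \<inter> X)"
      using o by (auto simp: openin_subtopology)
    then have "{x. f x \<in> U} \<inter> X \<in> sets p" by (rule open_meas)
    moreover have "{x\<in>X. f x \<in> a} = ({x. f x \<in> U} \<inter> X) \<inter> {x\<in>X. f x \<in> X}" using U by auto
    ultimately show ?case using preimX_meas[OF f] by auto
  next
    case Empty then show ?case by simp
  next
    case (Compl a)
    have "{x\<in>X. f x \<in> X - a} = {x\<in>X. f x \<in> X} - {x\<in>X. f x \<in> a}" by auto
    then show ?case using Compl preimX_meas[OF f] by auto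
  next
    case (Union a)
    have "{x\<in>X. f x \<in> \<Union>(range a)} = (\<Union>i. {x\<in>X. f x \<in> a i})" by auto
    then show ?case using Union by auto
  qed
qed

lemma cont_measurable:
  assumes f: "continuous_map conf_top conf_top f" and D: "D \<in> sets p" and DX: "\<And>x. x \<in> D \<Longrightarrow> f x \<in> X"
  shows "f \<in> measurable (restrict_space p D) p"
proof (rule measurableI)
  fix x assume "x \<in> space (restrict_space p D)"
  then show "f x \<in> space p" using DX by (auto simp: space space_restrict_space)
next
  fix A assume A: "A \<in> sets p"
  have "f -` A \<inter> space (restrict_space p D) = D \<inter> {x\<in>X. f x \<in> A}"
    using sets_subX[OF D] by (auto simp: space space_restrict_space)
  moreover have "D \<inter> {x\<in>X. f x \<in> A} \<in> sets p" using D preim_meas[OF f A] by auto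
  ultimately show "f -` A \<inter> space (restrict_space p D) \<in> sets (restrict_space p D)"
    using D by (simp add: sets_restr)
qed

lemma coord_meas: "{x\<in>X. x j = s} \<in> sets p"
proof -
  have "openin (subtopology conf_top X) ({x. x j = s} \<inter> X)"
    using cyl_open[of j s] unfolding openin_subtopology by blast
  then show ?thesis using open_meas by (simp add: Collect_conj_eq Int_commute Collect_mem_eq)
qed

lemma coord_measurable: "(\<lambda>x. x j) \<in> measurable p (count_space UNIV)"
proof -
  have "countable (UNIV :: 's set)" by simp
  then show ?thesis
    by (subst measurable_count_space_eq_countable) (auto simp: space coord_meas vimage_def Int_def conj_commute)
qed

end

definition wdom :: "('g \<Rightarrow> 's) set \<Rightarrow> 'g set \<Rightarrow> ('g \<Rightarrow> 's) \<Rightarrow> ('g \<Rightarrow> 's) \<Rightarrow> ('g \<Rightarrow> 's) set" where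
  "wdom X F u v = {x\<in>X. (\<forall>j\<in>F. x j = u j) \<and> sw F v x \<in> X}"

definition wval :: "('s \<Rightarrow> 'a::ab_group_add) \<Rightarrow> 'g set \<Rightarrow> ('g \<Rightarrow> 's) \<Rightarrow> ('g \<Rightarrow> 's) \<Rightarrow> 'a" where
  "wval G F u v = (\<Sum>j\<in>F. G (v j) - G (u j))"

definition Wset :: "('g set \<times> ('g \<Rightarrow> 's) \<times> ('g \<Rightarrow> 's)) set" where
  "Wset = {(F, u, v). finite F \<and> u \<in> (\<Pi>\<^sub>E j\<in>F. UNIV) \<and> v \<in> (\<Pi>\<^sub>E j\<in>F. UNIV)}"

lemma countable_Wset: "countable (Wset :: ('g::countable set \<times> ('g \<Rightarrow> 's::finite) \<times> ('g \<Rightarrow> 's)) set)"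
proof -
  have "Wset = (\<Union>F\<in>{F::'g set. finite F}. (\<lambda>(u, v). (F, u, v)) ` ((\<Pi>\<^sub>E j\<in>F. (UNIV::'s set)) \<times> (\<Pi>\<^sub>E j\<in>F. (UNIV::'s set))))"
    unfolding Wset_def by auto
  moreover have "countable ((\<lambda>(u, v). (F, u, v)) ` ((\<Pi>\<^sub>E j\<in>F. (UNIV::'s set)) \<times> (\<Pi>\<^sub>E j\<in>F. (UNIV::'s set))))"
    if "finite F" for F :: "'g set"
    using that by (intro countable_finite finite_imageI finite_cartesian_product finite_PiE) auto
  moreover have "countable (\<Union>F\<in>{F::'g set. finite F}. (\<lambda>(u, v). (F, u, v)) ` ((\<Pi>\<^sub>E j\<in>F. (UNIV::'s set)) \<times> (\<Pi>\<^sub>E j\<in>F. (UNIV::'s set))))"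
    by (rule countable_UN[OF countable_Collect_finite]) (use calculation(2) in simp)
  ultimately show ?thesis by simp
qed

lemma sw_id: "{j. x j \<noteq> y j} \<subseteq> F \<Longrightarrow> sw F (restrict y F) x = y"
  unfolding sw_def by (auto simp: fun_eq_iff)

lemma pair_window:
  assumes "(x, y) \<in> tail_rel X"
  shows "\<exists>F u v. (F, u, v) \<in> Wset \<and> x \<in> wdom X F u v \<and> sw F v x = y \<and> wval G F u v = Psi G x y"
proof -
  define F where "F = {j. x j \<noteq> y j}"
  have fin: "finite F" using assms by (simp add: tail_rel_def F_def)
  have sw: "sw F (restrict y F) x = y" by (rule sw_id) (simp add: F_def)
  show ?thesis
  proof (intro exI conjI)
    show "(F, restrict x F, restrict y F) \<in> Wset" using fin by (simp add: Wset_def)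
    show "x \<in> wdom X F (restrict x F) (restrict y F)" using assms sw by (simp add: wdom_def tail_rel_def)
    show "sw F (restrict y F) x = y" by (rule sw)
    show "wval G F (restrict x F) (restrict y F) = Psi G x y"
      by (simp add: wval_def Psi_def F_def)
  qed
qed

lemma window_graph:
  assumes "finite F" "x \<in> wdom X F u v"
  shows "(x, sw F v x) \<in> tail_rel X \<and> Psi G x (sw F v x) = wval G F u v"
proof -
  have d: "{j. x j \<noteq> sw F v x j} \<subseteq> F" by (auto simp: sw_def)
  then have "finite {j. x j \<noteq> sw F v x j}" using assms(1) finite_subset by blast
  then have "(x, sw F v x) \<in> tail_rel X" using assms(2) by (simp add: tail_rel_def wdom_def)
  moreover have "Psi G x (sw F v x) = (\<Sum>j\<in>F. G (sw F v x j) - G (x j))"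
    by (rule Psi_eq_sum[OF assms(1) d])
  moreover have "\<dots> = wval G F u v" using assms(2) by (simp add: wval_def sw_def wdom_def)
  ultimately show ?thesis by simp
qed

context SC
begin

interpretation P: prob_space p by (rule prob)

definition bb :: "(('g \<Rightarrow> 's) \<Rightarrow> ('g \<Rightarrow> 's)) \<Rightarrow> (('g \<Rightarrow> 's) \<Rightarrow> ('g \<Rightarrow> 's)) \<Rightarrow> ('g \<Rightarrow> 's) set \<Rightarrow> ('g \<Rightarrow> 's) set \<Rightarrow> bool" where
  "bb \<Phi> \<Phi>i B C \<longleftrightarrow> B \<in> sets p \<and> C \<in> sets p \<and> (\<forall>x\<in>B. \<Phi> x \<in> C \<and> \<Phi>i (\<Phi> x) = x) \<and>
     (\<forall>y\<in>C. \<Phi>i y \<in> B \<and> \<Phi> (\<Phi>i y) = y) \<and>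
     \<Phi> \<in> measurable (restrict_space p B) p \<and> \<Phi>i \<in> measurable (restrict_space p C) p"

lemma bb_inv: "bb \<Phi> \<Phi>i B C \<Longrightarrow> bb \<Phi>i \<Phi> C B"
  unfolding bb_def by auto

lemma bb_img:
  assumes "bb \<Phi> \<Phi>i B C" "A \<in> sets p" "A \<subseteq> B"
  shows "\<Phi> ` A = {y\<in>C. \<Phi>i y \<in> A}" "\<Phi> ` A \<in> sets p"
proof -
  show eq: "\<Phi> ` A = {y\<in>C. \<Phi>i y \<in> A}" using assms unfolding bb_def by force
  have C: "C \<in> sets p" and m: "\<Phi>i \<in> measurable (restrict_space p C) p" using assms(1) by (auto simp: bb_def)
  have "\<Phi>i -` A \<inter> space (restrict_space p C) \<in> sets (restrict_space p C)"
    using measurable_sets[OF m assms(2)] .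
  then have "{y\<in>C. \<Phi>i y \<in> A} \<in> sets p" using C by (auto simp: sets_restr space_restr vimage_def Int_def conj_commute)
  then show "\<Phi> ` A \<in> sets p" using eq by simp
qed

lemma bb_restrict:
  assumes "bb \<Phi> \<Phi>i B C" "A \<in> sets p" "A \<subseteq> B"
  shows "bb \<Phi> \<Phi>i A (\<Phi> ` A)"
proof -
  have sub: "\<Phi> ` A \<subseteq> C" using assms unfolding bb_def by auto
  have m1: "\<Phi> \<in> measurable (restrict_space p A) p"
    using assms(1) unfolding bb_def by (auto intro: measurable_restrict_mono[OF _ assms(3)])
  have m2: "\<Phi>i \<in> measurable (restrict_space p (\<Phi> ` A)) p"
    using assms(1) unfolding bb_def by (auto intro: measurable_restrict_mono[OF _ sub])
  have "\<Phi> ` A \<in> sets p" by (rule bb_img(2)[OF assms])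
  then show ?thesis using assms(1,2,3) m1 m2 unfolding bb_def by auto
qed

lemma bb_comp:
  assumes "bb \<Phi> \<Phi>i B C" "bb \<Psi>' \<Psi>i C D"
  shows "bb (\<Psi>' \<circ> \<Phi>) (\<Phi>i \<circ> \<Psi>i) B D"
proof -
  have m1: "\<Phi> \<in> measurable (restrict_space p B) (restrict_space p C)"
    using assms(1) unfolding bb_def by (auto simp: measurable_restrict_space2_iff space_restr)
  have m2: "\<Psi>i \<in> measurable (restrict_space p D) (restrict_space p C)"
    using assms(2) unfolding bb_def by (auto simp: measurable_restrict_space2_iff space_restr)
  show ?thesis using assms unfolding bb_def
    by (auto intro: measurable_comp[OF m1] measurable_comp[OF m2])
qed

lemma bb_borel_bij: "bb \<Phi> \<Phi>i B C \<Longrightarrow> borel_bij p \<Phi> B C"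
proof -
  assume bb: "bb \<Phi> \<Phi>i B C"
  have B: "B \<in> sets p" and C: "C \<in> sets p" using bb by (simp_all add: bb_def)
  have f1: "\<forall>x\<in>B. \<Phi> x \<in> C \<and> \<Phi>i (\<Phi> x) = x" and f2: "\<forall>y\<in>C. \<Phi>i y \<in> B \<and> \<Phi> (\<Phi>i y) = y"
    using bb by (simp_all add: bb_def)
  have mm1: "\<Phi> \<in> measurable (restrict_space p B) p" and mm2: "\<Phi>i \<in> measurable (restrict_space p C) p"
    using bb by (simp_all add: bb_def)
  have inj: "inj_on \<Phi> B" using f1 by (metis inj_onI)
  have img: "\<Phi> ` B = C"
  proof
    show "\<Phi> ` B \<subseteq> C" using f1 by blast
    show "C \<subseteq> \<Phi> ` B"
    proof
      fix y assume "y \<in> C"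
      then have "\<Phi>i y \<in> B" "\<Phi> (\<Phi>i y) = y" using f2 by blast+
      then show "y \<in> \<Phi> ` B" by (metis image_eqI)
    qed
  qed
  have bij: "bij_betw \<Phi> B C" using inj img by (simp add: bij_betw_def)
  have eqi: "the_inv_into B \<Phi> y = \<Phi>i y" if "y \<in> C" for y
  proof -
    have "\<Phi>i y \<in> B" "\<Phi> (\<Phi>i y) = y" using f2 that by blast+
    then show ?thesis using the_inv_into_f_f[OF inj, of "\<Phi>i y"] by simp
  qed
  have m1: "\<Phi> \<in> measurable (restrict_space p B) (restrict_space p C)"
    using mm1 f1 by (simp add: measurable_restrict_space2_iff space_restr[OF B] Pi_iff)
  have m2: "\<Phi>i \<in> measurable (restrict_space p C) (restrict_space p B)"
    using mm2 f2 by (simp add: measurable_restrict_space2_iff space_restr[OF C] Pi_iff)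
  have "the_inv_into B \<Phi> \<in> measurable (restrict_space p C) (restrict_space p B) \<longleftrightarrow>
        \<Phi>i \<in> measurable (restrict_space p C) (restrict_space p B)"
    by (rule measurable_cong) (simp add: space_restr[OF C] eqi)
  then have m3: "the_inv_into B \<Phi> \<in> measurable (restrict_space p C) (restrict_space p B)" using m2 by simp
  show ?thesis unfolding borel_bij_def using B C bij m1 m3 by blast
qed

lemma borel_bij_bb: "borel_bij p \<Phi> B C \<Longrightarrow> bb \<Phi> (the_inv_into B \<Phi>) B C"
proof -
  assume bbj: "borel_bij p \<Phi> B C"
  then have bij: "bij_betw \<Phi> B C" and B: "B \<in> sets p" and C: "C \<in> sets p"
    and m1: "\<Phi> \<in> measurable (restrict_space p B) (restrict_space p C)"
    and m2: "the_inv_into B \<Phi> \<in> measurable (restrict_space p C) (restrict_space p B)"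
    unfolding borel_bij_def by blast+
  have inj: "inj_on \<Phi> B" using bij by (simp add: bij_betw_def)
  have img: "\<Phi> ` B = C" using bij by (simp add: bij_betw_def)
  show ?thesis unfolding bb_def
  proof (intro conjI ballI)
    show "B \<in> sets p" "C \<in> sets p" by fact+
  next
    fix x assume x: "x \<in> B"
    show "\<Phi> x \<in> C" using img x by blast
    show "the_inv_into B \<Phi> (\<Phi> x) = x" by (rule the_inv_into_f_f[OF inj x])
  next
    fix y assume y: "y \<in> C"
    then have y': "y \<in> \<Phi> ` B" using img by simp
    show "the_inv_into B \<Phi> y \<in> B" by (rule the_inv_into_into[OF inj y' subset_refl])
    show "\<Phi> (the_inv_into B \<Phi> y) = y" by (rule f_the_inv_into_f[OF inj y'])
  next
    show "\<Phi> \<in> measurable (restrict_space p B) p" using m1 by (simp add: measurable_restrict_space2_iff)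
    show "the_inv_into B \<Phi> \<in> measurable (restrict_space p C) p" using m2 by (simp add: measurable_restrict_space2_iff)
  qed
qed

lemma ns_img:
  assumes bb: "bb \<Phi> \<Phi>i B C" and g: "\<forall>x\<in>B. (x, \<Phi> x) \<in> tail_rel X"
    and A: "A \<in> sets p" "A \<subseteq> B" "emeasure p A = 0"
  shows "emeasure p (\<Phi> ` A) = 0"
proof -
  have "A \<in> null_sets p" using A by auto
  then have "tail_rel X `` A \<in> null_sets p" using nonsing by (simp add: nonsingular_def)
  moreover have "\<Phi> ` A \<subseteq> tail_rel X `` A" using g A by auto
  ultimately have "\<Phi> ` A \<in> null_sets p" using bb_img(2)[OF bb A(1,2)] null_sets_subset by blast
  then show ?thesis by auto
qed

lemma inv_img:
  assumes bb: "bb \<Phi> \<Phi>i B C" and g: "\<forall>x\<in>B. (x, \<Phi> x) \<in> tail_rel_Psi X G"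
    and A: "A \<in> sets p" "A \<subseteq> B"
  shows "emeasure p (\<Phi> ` A) = emeasure p A"
  using inv bb_borel_bij[OF bb] g A unfolding invariant_def by blast

lemma graph_inv:
  assumes bb: "bb \<Phi> \<Phi>i B C" and g: "\<forall>x\<in>B. (x, \<Phi> x) \<in> tail_rel X"
  shows "\<forall>y\<in>C. (y, \<Phi>i y) \<in> tail_rel X \<and> Psi G' y (\<Phi>i y) = - Psi G' (\<Phi>i y) (\<Phi> (\<Phi>i y))"
proof
  fix y assume y: "y \<in> C"
  then have "\<Phi>i y \<in> B" "\<Phi> (\<Phi>i y) = y" using bb unfolding bb_def by auto
  then have t: "(\<Phi>i y, y) \<in> tail_rel X" using g by metis
  show "(y, \<Phi>i y) \<in> tail_rel X \<and> Psi G' y (\<Phi>i y) = - Psi G' (\<Phi>i y) (\<Phi> (\<Phi>i y))"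
    using tail_rel_sym[OF t] Psi_sym[OF t] \<open>\<Phi> (\<Phi>i y) = y\<close> by simp
qed

lemma wdom_meas: "wdom X F u v \<in> sets p"
proof -
  have a: "{x\<in>space p. \<forall>j\<in>F. x j = u j} \<in> sets p"
    by (rule sets.sets_Collect_countable_All') (auto simp: space coord_meas)
  have "wdom X F u v = {x\<in>space p. \<forall>j\<in>F. x j = u j} \<inter> {x\<in>X. sw F v x \<in> X}"
    by (auto simp: wdom_def space)
  then show ?thesis using a preimX_meas[OF sw_cont] by simp
qed

lemma window_bb:
  assumes "finite F"
  shows "bb (sw F v) (sw F u) (wdom X F u v) (wdom X F v u)"
proof -
  have a: "sw F u (sw F v x) = x" if "x \<in> wdom X F u v" for x u v
    using that by (auto simp: sw_def wdom_def fun_eq_iff)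
  have b: "sw F v x \<in> wdom X F v u" if "x \<in> wdom X F u v" for x u v
    using that a[OF that] by (auto simp: wdom_def sw_def)
  have c: "sw F v x \<in> X" if "x \<in> wdom X F u v" for x u v
    using that by (simp add: wdom_def)
  show ?thesis unfolding bb_def
    using a b c wdom_meas
    by (auto intro!: cont_measurable[OF sw_cont])
qed

lemma T0_trans:
  assumes "(x, y) \<in> tail_rel_Psi X G" "(y, z) \<in> tail_rel_Psi X G"
  shows "(x, z) \<in> tail_rel_Psi X G"
proof -
  have a: "(x, y) \<in> tail_rel X" "Psi G x y = 0" "(y, z) \<in> tail_rel X" "Psi G y z = 0"
    using assms by (auto simp: tail_rel_Psi_def)
  show ?thesis using tail_rel_trans[OF a(1,3)] Psi_trans[OF a(1,3), of G] a(2,4)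
    by (simp add: tail_rel_Psi_def)
qed

lemma connect:
  assumes E: "E \<in> sets p" "emeasure p E \<noteq> 0" and B: "B \<in> sets p" "emeasure p B \<noteq> 0"
  shows "\<exists>\<theta> \<theta>i S. bb \<theta> \<theta>i S (\<theta> ` S) \<and> S \<subseteq> E \<and> \<theta> ` S \<subseteq> B \<and> emeasure p S \<noteq> 0 \<and>
           (\<forall>x\<in>S. (x, \<theta> x) \<in> tail_rel_Psi X G)"
proof -
  define W0 where "W0 = {w\<in>(Wset :: ('g set \<times> ('g \<Rightarrow> 's) \<times> ('g \<Rightarrow> 's)) set). (case w of (F, u, v) \<Rightarrow> wval G F u v) = 0}"
  define img where "img w = (case w of (F, u, v) \<Rightarrow> sw F v ` (E \<inter> wdom X F u v))" for w
  define sat where "sat = (\<Union>w\<in>W0. img w)"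
  have cW0: "countable W0" unfolding W0_def by (rule countable_subset[OF _ countable_Wset]) auto
  have img_meas: "img w \<in> sets p" if "w \<in> W0" for w
  proof -
    obtain F u v where w: "w = (F, u, v)" "finite F" using \<open>w \<in> W0\<close> by (cases w) (auto simp: W0_def Wset_def)
    show ?thesis unfolding img_def w
      by (auto intro!: bb_img(2)[OF window_bb[OF w(2)]] wdom_meas E(1))
  qed
  have sat_meas: "sat \<in> sets p" unfolding sat_def using cW0 img_meas by (intro sets.countable_UN'') auto
  have sat_eq: "sat = tail_rel_Psi X G `` E"
  proof
    show "sat \<subseteq> tail_rel_Psi X G `` E"
    proof
      fix y assume "y \<in> sat"
      then obtain F u v x where "(F, u, v) \<in> W0" "x \<in> E" "x \<in> wdom X F u v" "y = sw F v x"
        unfolding sat_def img_def by auto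
      then show "y \<in> tail_rel_Psi X G `` E"
        using window_graph[of F x X u v G] by (auto simp: W0_def Wset_def tail_rel_Psi_def)
    qed
  next
    show "tail_rel_Psi X G `` E \<subseteq> sat"
    proof
      fix y assume "y \<in> tail_rel_Psi X G `` E"
      then obtain x where x: "x \<in> E" "(x, y) \<in> tail_rel X" "Psi G x y = 0" by (auto simp: tail_rel_Psi_def)
      from pair_window[OF x(2), of G] obtain F u v where
        "(F, u, v) \<in> Wset" "x \<in> wdom X F u v" "sw F v x = y" "wval G F u v = Psi G x y" by blast
      then show "y \<in> sat" using x unfolding sat_def img_def W0_def by (auto intro!: bexI[of _ "(F, u, v)"])
    qed
  qed
  have EX: "E \<subseteq> X" using sets_subX[OF E(1)] .
  have E_sat: "E \<subseteq> sat" unfolding sat_eq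
  proof
    fix x assume x: "x \<in> E"
    then have "x \<in> X" using EX by blast
    then have "(x, x) \<in> tail_rel X" by (rule tail_rel_refl)
    then have "(x, x) \<in> tail_rel_Psi X G" unfolding tail_rel_Psi_def by (simp add: Psi_self)
    then show "x \<in> tail_rel_Psi X G `` E" using x by blast
  qed
  have inv_sat: "tail_rel_Psi X G `` sat \<subseteq> sat" unfolding sat_eq using T0_trans by blast
  have "emeasure p sat = 0 \<or> emeasure p sat = 1" using erg sat_meas inv_sat by (auto simp: ergodic_def)
  moreover have "emeasure p sat \<noteq> 0"
    using emeasure_mono[OF E_sat sat_meas] E(2) by auto
  ultimately have sat1: "emeasure p sat = 1" by simp
  have compl_null: "X - sat \<in> null_sets p"
  proof -
    have "emeasure p (space p - sat) = emeasure p (space p) - emeasure p sat"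
      by (rule emeasure_compl[OF sat_meas]) simp
    then have "emeasure p (X - sat) = 0" using sat1 P.emeasure_space_1 by (simp add: space)
    moreover have "X - sat \<in> sets p" using X_sets sat_meas by (rule sets.Diff)
    ultimately show ?thesis by (rule null_setsI)
  qed
  have "B \<inter> sat \<notin> null_sets p"
  proof
    assume "B \<inter> sat \<in> null_sets p"
    then have "(B \<inter> sat) \<union> (X - sat) \<in> null_sets p" using compl_null by auto
    moreover have "B \<subseteq> (B \<inter> sat) \<union> (X - sat)" using sets_subX[OF B(1)] by auto
    ultimately have "B \<in> null_sets p" using B(1) null_sets_subset by blast
    then show False using B(2) by auto
  qed
  moreover have "B \<inter> sat = (\<Union>w\<in>W0. B \<inter> img w)" unfolding sat_def by auto
  ultimately obtain w where w: "w \<in> W0" "B \<inter> img w \<notin> null_sets p"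
    using null_sets_UN'[OF cW0, of "\<lambda>w. B \<inter> img w" p] by auto
  obtain F u v where wF: "w = (F, u, v)" "finite F" "wval G F u v = 0"
    using w(1) by (cases w) (auto simp: W0_def Wset_def)
  define S where "S = {x \<in> E \<inter> wdom X F u v. sw F v x \<in> B}"
  have S_meas: "S \<in> sets p"
  proof -
    have "S = E \<inter> wdom X F u v \<inter> {x\<in>X. sw F v x \<in> B}" using EX by (auto simp: S_def)
    then show ?thesis using E(1) wdom_meas preim_meas[OF sw_cont B(1)] by auto
  qed
  have S_sub: "S \<subseteq> wdom X F u v" by (auto simp: S_def)
  have bbS: "bb (sw F v) (sw F u) S (sw F v ` S)"
    by (rule bb_restrict[OF window_bb[OF wF(2)] S_meas S_sub])
  have imgS: "sw F v ` S = B \<inter> img w" unfolding S_def img_def wF by auto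
  have gS: "\<forall>x\<in>S. (x, sw F v x) \<in> tail_rel_Psi X G"
    using window_graph[OF wF(2), of _ X u v G] wF(3) S_sub by (auto simp: tail_rel_Psi_def)
  have "emeasure p (sw F v ` S) = emeasure p S"
    by (rule inv_img[OF bbS gS S_meas]) simp
  moreover have "emeasure p (sw F v ` S) \<noteq> 0" using imgS w(2) bb_img(2)[OF bbS S_meas] by (auto simp: null_sets_def)
  ultimately show ?thesis
    using bbS gS imgS by (intro exI[of _ "sw F v"] exI[of _ "sw F u"] exI[of _ S]) (auto simp: S_def)
qed

end

context SC
begin

interpretation P: prob_space p by (rule prob)

lemma bb_sets: "bb \<Phi> \<Phi>i B C \<Longrightarrow> B \<in> sets p \<and> C \<in> sets p"
  by (simp add: bb_def)

lemma bb_image_full: "bb \<Phi> \<Phi>i B C \<Longrightarrow> \<Phi> ` B = C"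
  unfolding bb_def by force

lemma cov:
  assumes bb: "bb \<theta> \<theta>i S S'" and g: "\<forall>x\<in>S. (x, \<theta> x) \<in> tail_rel_Psi X G"
    and f: "f \<in> borel_measurable p"
  shows "(\<integral>\<^sup>+x. f x * indicator S' x \<partial>p) = (\<integral>\<^sup>+x. f (\<theta> x) * indicator S x \<partial>p)"
proof -
  have S: "S \<in> sets p" and S': "S' \<in> sets p" using bb by (auto simp: bb_def)
  have mt: "\<theta> \<in> measurable (restrict_space p S) p" using bb by (simp add: bb_def)
  define M1 where "M1 = distr (restrict_space p S) p \<theta>"
  define M2 where "M2 = density p (indicator S')"
  have "M1 = M2"
  proof (rule measure_eqI)
    show "sets M1 = sets M2" by (simp add: M1_def M2_def)
  next
    fix A assume "A \<in> sets M1"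
    then have A: "A \<in> sets p" by (simp add: M1_def)
    have AS: "A \<inter> S' \<in> sets p" using A S' by auto
    have Z: "\<theta>i ` (A \<inter> S') = {x\<in>S. \<theta> x \<in> A \<inter> S'}" "\<theta>i ` (A \<inter> S') \<in> sets p"
      using bb_img[OF bb_inv[OF bb] AS] by auto
    have Z2: "{x\<in>S. \<theta> x \<in> A \<inter> S'} = \<theta> -` A \<inter> space (restrict_space p S)"
      using bb S by (auto simp: bb_def space_restr)
    have thZ: "\<theta> ` (\<theta>i ` (A \<inter> S')) = A \<inter> S'" using bb unfolding bb_def by force
    have "emeasure M1 A = emeasure (restrict_space p S) (\<theta> -` A \<inter> space (restrict_space p S))"
      unfolding M1_def by (rule emeasure_distr[OF mt]) (simp add: A)
    also have "\<dots> = emeasure (restrict_space p S) (\<theta>i ` (A \<inter> S'))"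
      using Z(1) Z2 by simp
    also have "\<dots> = emeasure p (\<theta>i ` (A \<inter> S'))"
      by (rule em_restr[OF S]) (use Z(1) in blast)
    also have "\<dots> = emeasure p (\<theta> ` (\<theta>i ` (A \<inter> S')))"
      using Z Z2 by (intro inv_img[OF bb g, symmetric]) auto
    also have "\<dots> = emeasure p (A \<inter> S')" using thZ by simp
    also have "\<dots> = emeasure M2 A"
    proof -
      have "emeasure M2 A = (\<integral>\<^sup>+x. indicator S' x * indicator A x \<partial>p)"
        unfolding M2_def using A S' by (subst emeasure_density) auto
      also have "\<dots> = (\<integral>\<^sup>+x. indicator (A \<inter> S') x \<partial>p)"
        by (intro nn_integral_cong) (auto split: split_indicator)
      finally show ?thesis using AS by simp
    qed
    finally show "emeasure M1 A = emeasure M2 A" .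
  qed
  have fd: "f \<in> borel_measurable M1" using f by (simp add: M1_def)
  have "(\<integral>\<^sup>+x. f x \<partial>M1) = (\<integral>\<^sup>+x. f (\<theta> x) \<partial>restrict_space p S)"
    unfolding M1_def by (rule nn_integral_distr[OF mt]) (use f in simp)
  also have "\<dots> = (\<integral>\<^sup>+x. f (\<theta> x) * indicator S x \<partial>p)"
    by (rule nn_restr[OF S])
  finally have 1: "(\<integral>\<^sup>+x. f x \<partial>M1) = (\<integral>\<^sup>+x. f (\<theta> x) * indicator S x \<partial>p)" .
  have "(\<integral>\<^sup>+x. f x \<partial>M2) = (\<integral>\<^sup>+x. indicator S' x * f x \<partial>p)"
    unfolding M2_def using f S' by (subst nn_integral_density) auto
  then have 2: "(\<integral>\<^sup>+x. f x \<partial>M2) = (\<integral>\<^sup>+x. f x * indicator S' x \<partial>p)"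
    by (simp add: mult.commute)
  show ?thesis using 1 2 \<open>M1 = M2\<close> by simp
qed

lemma comp_graph:
  assumes "(x, y) \<in> tail_rel X" "(y, z) \<in> tail_rel X"
  shows "(x, z) \<in> tail_rel X \<and> Psi G x z = Psi G x y + Psi G y z"
  using tail_rel_trans[OF assms] Psi_trans[OF assms] by simp

lemma const:
  assumes bb: "bb \<Phi> \<Phi>i B C" and g: "\<forall>x\<in>B. (x, \<Phi> x) \<in> tail_rel X"
    and hv: "\<forall>x\<in>B. Psi G x (\<Phi> x) = h" and pB: "emeasure p B \<noteq> 0"
  shows "\<forall>A\<in>sets p. A \<subseteq> B \<longrightarrow> emeasure p (\<Phi> ` A) = emeasure p C / emeasure p B * emeasure p A"
proof -
  have B: "B \<in> sets p" and C: "C \<in> sets p" using bb by (auto simp: bb_def)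
  have mi: "\<Phi>i \<in> measurable (restrict_space p C) p" using bb by (simp add: bb_def)
  define \<nu> where "\<nu> = distr (restrict_space p C) p \<Phi>i"
  have nuA: "emeasure \<nu> A = emeasure p (\<Phi> ` (A \<inter> B))" if A: "A \<in> sets p" for A
  proof -
    have AB: "A \<inter> B \<in> sets p" "A \<inter> B \<subseteq> B" using A B by auto
    have e: "\<Phi>i -` A \<inter> space (restrict_space p C) = \<Phi> ` (A \<inter> B)"
      using bb_img(1)[OF bb AB] bb C by (auto simp: space_restr bb_def)
    have "emeasure \<nu> A = emeasure (restrict_space p C) (\<Phi>i -` A \<inter> space (restrict_space p C))"
      unfolding \<nu>_def by (rule emeasure_distr[OF mi]) (simp add: A)
    also have "\<dots> = emeasure p (\<Phi> ` (A \<inter> B))"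
      unfolding e by (rule em_restr[OF C]) (use bb in \<open>force simp: bb_def\<close>)
    finally show ?thesis .
  qed
  have sets_nu: "sets \<nu> = sets p" by (simp add: \<nu>_def)
  have ac: "absolutely_continuous p \<nu>"
    unfolding absolutely_continuous_def
  proof
    fix A assume "A \<in> null_sets p"
    then have A: "A \<in> sets p" "emeasure p A = 0" by auto
    have "emeasure p (A \<inter> B) = 0" using A B emeasure_mono[of "A \<inter> B" A p] by auto
    then have "emeasure p (\<Phi> ` (A \<inter> B)) = 0" using A B by (intro ns_img[OF bb g]) auto
    then show "A \<in> null_sets \<nu>" using nuA[OF A(1)] A sets_nu by auto
  qed
  define \<rho> where "\<rho> = RN_deriv p \<nu>"
  have rho_m[measurable]: "\<rho> \<in> borel_measurable p" unfolding \<rho>_def by simp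
  have dens: "density p \<rho> = \<nu>" unfolding \<rho>_def by (rule P.density_RN_deriv[OF ac sets_nu])
  have int: "emeasure p (\<Phi> ` A) = (\<integral>\<^sup>+x. \<rho> x * indicator A x \<partial>p)" if "A \<in> sets p" "A \<subseteq> B" for A
  proof -
    have "emeasure p (\<Phi> ` A) = emeasure \<nu> A" using nuA[OF that(1)] that(2) by (simp add: Int_absorb2)
    also have "\<dots> = emeasure (density p \<rho>) A" by (simp add: dens)
    also have "\<dots> = (\<integral>\<^sup>+x. \<rho> x * indicator A x \<partial>p)" using that by (simp add: emeasure_density)
    finally show ?thesis .
  qed
  have fin: "emeasure p A \<noteq> \<infinity>" for A by (simp add: P.emeasure_finite)
  have dich: "\<not> (emeasure p {x\<in>B. r < \<rho> x} \<noteq> 0 \<and> emeasure p {x\<in>B. \<rho> x \<le> r} \<noteq> 0)" for r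
  proof
    assume both: "emeasure p {x\<in>B. r < \<rho> x} \<noteq> 0 \<and> emeasure p {x\<in>B. \<rho> x \<le> r} \<noteq> 0"
    have Bs[measurable]: "B \<in> sets p" by (rule B)
    have E1: "{x\<in>B. r < \<rho> x} \<in> sets p"
    proof -
      have "{x\<in>space p. x \<in> B \<and> r < \<rho> x} \<in> sets p" by measurable
      moreover have "{x\<in>space p. x \<in> B \<and> r < \<rho> x} = {x\<in>B. r < \<rho> x}" using sets_subX[OF B] by (auto simp: space)
      ultimately show ?thesis by simp
    qed
    have E2: "{x\<in>B. \<rho> x \<le> r} \<in> sets p"
    proof -
      have "{x\<in>space p. x \<in> B \<and> \<rho> x \<le> r} \<in> sets p" by measurable
      moreover have "{x\<in>space p. x \<in> B \<and> \<rho> x \<le> r} = {x\<in>B. \<rho> x \<le> r}" using sets_subX[OF B] by (auto simp: space)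
      ultimately show ?thesis by simp
    qed
    from connect[OF E1 _ E2] both obtain \<theta> \<theta>i S where
      th: "bb \<theta> \<theta>i S (\<theta> ` S)" "S \<subseteq> {x\<in>B. r < \<rho> x}" "\<theta> ` S \<subseteq> {x\<in>B. \<rho> x \<le> r}" "emeasure p S \<noteq> 0"
        "\<forall>x\<in>S. (x, \<theta> x) \<in> tail_rel_Psi X G" by blast
    have S: "S \<in> sets p" and thS: "\<theta> ` S \<in> sets p" using th(1) by (auto simp: bb_def)
    have SB: "S \<subseteq> B" "\<theta> ` S \<subseteq> B" using th(2,3) by auto
    define S1 where "S1 = \<Phi> ` S"
    have S1: "S1 \<in> sets p" "S1 \<subseteq> C" unfolding S1_def using bb_img(2)[OF bb S SB(1)] bb SB(1)
      by (auto simp: bb_def)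
    have bb1: "bb \<Phi>i \<Phi> S1 S"
    proof -
      have "bb \<Phi>i \<Phi> S1 (\<Phi>i ` S1)" by (rule bb_restrict[OF bb_inv[OF bb] S1])
      moreover have "\<Phi>i ` S1 = S" unfolding S1_def using bb SB(1) by (force simp: bb_def)
      ultimately show ?thesis by simp
    qed
    have bb3: "bb \<Phi> \<Phi>i (\<theta> ` S) (\<Phi> ` \<theta> ` S)" by (rule bb_restrict[OF bb thS SB(2)])
    have bbX: "bb (\<Phi> \<circ> (\<theta> \<circ> \<Phi>i)) ((\<Phi> \<circ> \<theta>i) \<circ> \<Phi>i) S1 (\<Phi> ` \<theta> ` S)"
      by (rule bb_comp[OF bb_comp[OF bb1 th(1)] bb3])
    have gX: "\<forall>y\<in>S1. (y, (\<Phi> \<circ> (\<theta> \<circ> \<Phi>i)) y) \<in> tail_rel_Psi X G"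
    proof
      fix y assume y: "y \<in> S1"
      define x where "x = \<Phi>i y"
      have x: "x \<in> S" "\<Phi> x = y" using bb1 y unfolding x_def bb_def by auto
      have xB: "x \<in> B" using x SB by auto
      have tx: "\<theta> x \<in> B" using x SB by auto
      have t1: "(x, y) \<in> tail_rel X" "Psi G x y = h" using g hv xB x by auto
      have t2: "(x, \<theta> x) \<in> tail_rel X" "Psi G x (\<theta> x) = 0" using th(5) x by (auto simp: tail_rel_Psi_def)
      have t3: "(\<theta> x, \<Phi> (\<theta> x)) \<in> tail_rel X" "Psi G (\<theta> x) (\<Phi> (\<theta> x)) = h" using g hv tx by auto
      have a: "(y, \<theta> x) \<in> tail_rel X" "Psi G y (\<theta> x) = - h"
        using comp_graph[OF tail_rel_sym[OF t1(1)] t2(1)] Psi_sym[OF t1(1), of G] t1(2) t2(2) by auto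
      have "(y, \<Phi> (\<theta> x)) \<in> tail_rel X" "Psi G y (\<Phi> (\<theta> x)) = 0"
        using comp_graph[OF a(1) t3(1)] a(2) t3(2) by auto
      then show "(y, (\<Phi> \<circ> (\<theta> \<circ> \<Phi>i)) y) \<in> tail_rel_Psi X G"
        by (simp add: tail_rel_Psi_def x_def)
    qed
    have imgX: "(\<Phi> \<circ> (\<theta> \<circ> \<Phi>i)) ` S1 = \<Phi> ` \<theta> ` S" using bb_image_full[OF bbX] .
    have eq1: "emeasure p (\<Phi> ` \<theta> ` S) = emeasure p (\<Phi> ` S)"
      using inv_img[OF bbX gX S1(1)] imgX by (simp add: S1_def)
    have I1: "(\<integral>\<^sup>+x. \<rho> x * indicator (\<theta> ` S) x \<partial>p) = (\<integral>\<^sup>+x. \<rho> x * indicator S x \<partial>p)"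
      using eq1 unfolding int[OF thS SB(2)] int[OF S SB(1)] .
    have I2: "(\<integral>\<^sup>+x. \<rho> x * indicator (\<theta> ` S) x \<partial>p) = (\<integral>\<^sup>+x. \<rho> (\<theta> x) * indicator S x \<partial>p)"
      by (rule cov[OF th(1) th(5) rho_m])
    define MS where "MS = restrict_space p S"
    have spMS: "space MS = S" unfolding MS_def using S by (simp add: space_restr)
    have R1: "(\<integral>\<^sup>+x. \<rho> x \<partial>MS) = (\<integral>\<^sup>+x. \<rho> x * indicator S x \<partial>p)"
      unfolding MS_def by (rule nn_restr[OF S])
    have R2: "(\<integral>\<^sup>+x. \<rho> (\<theta> x) \<partial>MS) = (\<integral>\<^sup>+x. \<rho> (\<theta> x) * indicator S x \<partial>p)"
      unfolding MS_def by (rule nn_restr[OF S])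
    have mth: "\<theta> \<in> measurable MS p" using th(1) by (simp add: bb_def MS_def)
    have m1: "(\<lambda>x. \<rho> (\<theta> x)) \<in> borel_measurable MS" using measurable_comp[OF mth rho_m] by (simp add: comp_def)
    have m2: "\<rho> \<in> borel_measurable MS" unfolding MS_def by (rule measurable_restrict_space1[OF rho_m])
    have eqMS: "(\<integral>\<^sup>+x. \<rho> (\<theta> x) \<partial>MS) = (\<integral>\<^sup>+x. \<rho> x \<partial>MS)"
      unfolding R1 R2 I2[symmetric] I1 ..
    have finS: "(\<integral>\<^sup>+x. \<rho> (\<theta> x) \<partial>MS) \<noteq> \<infinity>"
      unfolding eqMS R1 int[OF S SB(1), symmetric] by (rule fin)
    have lt: "\<rho> (\<theta> x) < \<rho> x" if "x \<in> S" for x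
    proof -
      have "\<rho> (\<theta> x) \<le> r" using th(3) that by auto
      moreover have "r < \<rho> x" using th(2) that by auto
      ultimately show ?thesis by simp
    qed
    have ae1: "AE x in MS. \<rho> (\<theta> x) \<le> \<rho> x"
    proof (rule AE_I2)
      fix x assume "x \<in> space MS"
      then have "x \<in> S" using spMS by simp
      then show "\<rho> (\<theta> x) \<le> \<rho> x" using lt by (blast intro: less_imp_le)
    qed
    have nae: "\<not> (AE x in MS. \<rho> x \<le> \<rho> (\<theta> x))"
    proof
      assume ae: "AE x in MS. \<rho> x \<le> \<rho> (\<theta> x)"
      have eqs: "{x\<in>space MS. \<not> \<rho> x \<le> \<rho> (\<theta> x)} = space MS"
      proof (rule set_eqI, rule iffI)
        fix x assume "x \<in> space MS"
        then have "x \<in> S" using spMS by simp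
        then have "\<rho> (\<theta> x) < \<rho> x" by (rule lt)
        then have "\<not> \<rho> x \<le> \<rho> (\<theta> x)" by (simp add: not_le)
        then show "x \<in> {x\<in>space MS. \<not> \<rho> x \<le> \<rho> (\<theta> x)}" using \<open>x \<in> space MS\<close> by blast
      qed blast
      have "emeasure MS (space MS) = 0" using AE_iff_measurable[OF sets.top eqs] ae by blast
      moreover have "emeasure MS (space MS) = emeasure p S"
        unfolding spMS unfolding MS_def by (rule em_restr[OF S]) simp
      ultimately show False using th(4) by simp
    qed
    have "(\<integral>\<^sup>+x. \<rho> (\<theta> x) \<partial>MS) < (\<integral>\<^sup>+x. \<rho> x \<partial>MS)"
      by (rule nn_integral_less[OF m1 m2 finS ae1 nae])
    then show False unfolding eqMS by simp
  qed
  define c where "c = emeasure p C / emeasure p B"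
  have Bs[measurable]: "B \<in> sets p" by (rule B)
  define MB where "MB = restrict_space p B"
  have spMB: "space MB = B" unfolding MB_def using B by (simp add: space_restr)
  have IB: "(\<integral>\<^sup>+x. \<rho> x \<partial>MB) = emeasure p C"
  proof -
    have "(\<integral>\<^sup>+x. \<rho> x \<partial>MB) = (\<integral>\<^sup>+x. \<rho> x * indicator B x \<partial>p)"
      unfolding MB_def by (rule nn_restr[OF B])
    also have "\<dots> = emeasure p (\<Phi> ` B)" using int[OF B] by simp
    finally show ?thesis using bb_image_full[OF bb] by simp
  qed
  have cB: "c * emeasure p B = emeasure p C"
  proof -
    have "emeasure p B < \<top>" using P.emeasure_finite[of B] top.not_eq_extremum by blast
    then show ?thesis unfolding c_def using pB by (simp add: ennreal_divide_times)
  qed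
  have IcB: "(\<integral>\<^sup>+x. c \<partial>MB) = emeasure p C"
  proof -
    have "(\<integral>\<^sup>+x. c \<partial>MB) = (\<integral>\<^sup>+x. c * indicator B x \<partial>p)"
      unfolding MB_def by (rule nn_restr[OF B])
    also have "\<dots> = c * emeasure p B" using B by (simp add: nn_integral_cmult_indicator)
    finally show ?thesis using cB by simp
  qed
  have finC: "emeasure p C \<noteq> \<infinity>" by (rule fin)
  have m2: "\<rho> \<in> borel_measurable MB" unfolding MB_def by (rule measurable_restrict_space1[OF rho_m])
  have E1: "{x\<in>B. c < \<rho> x} \<in> sets p"
  proof -
    have "{x\<in>space p. x \<in> B \<and> c < \<rho> x} \<in> sets p" by measurable
    moreover have "{x\<in>space p. x \<in> B \<and> c < \<rho> x} = {x\<in>B. c < \<rho> x}" using sets_subX[OF B] by (auto simp: space)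
    ultimately show ?thesis by simp
  qed
  have E2: "{x\<in>B. \<rho> x \<le> c} \<in> sets p"
  proof -
    have "{x\<in>space p. x \<in> B \<and> \<rho> x \<le> c} \<in> sets p" by measurable
    moreover have "{x\<in>space p. x \<in> B \<and> \<rho> x \<le> c} = {x\<in>B. \<rho> x \<le> c}" using sets_subX[OF B] by (auto simp: space)
    ultimately show ?thesis by simp
  qed
  have AEMB: "(AE x in MB. P x) \<longleftrightarrow> (AE x in p. x \<in> B \<longrightarrow> P x)" for P
    unfolding MB_def by (rule AE_restr[OF B])
  have AEc: "AE x in MB. \<rho> x = c"
  proof (cases "emeasure p {x\<in>B. c < \<rho> x} = 0")
    case True
    then have "{x\<in>B. c < \<rho> x} \<in> null_sets p" using E1 by auto
    then have le: "AE x in p. x \<in> B \<longrightarrow> \<rho> x \<le> c"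
      by (rule AE_I') (auto simp: space)
    then have le': "AE x in MB. \<rho> x \<le> c" using AEMB by simp
    have "AE x in MB. c \<le> \<rho> x"
    proof (rule ccontr)
      assume "\<not> (AE x in MB. c \<le> \<rho> x)"
      then have "(\<integral>\<^sup>+x. \<rho> x \<partial>MB) < (\<integral>\<^sup>+x. c \<partial>MB)"
        using IB finC le' by (intro nn_integral_less[OF m2]) auto
      then show False using IB IcB by simp
    qed
    then show ?thesis using le' by eventually_elim auto
  next
    case False
    then have "emeasure p {x\<in>B. \<rho> x \<le> c} = 0" using dich[of c] by blast
    then have "{x\<in>B. \<rho> x \<le> c} \<in> null_sets p" using E2 by auto
    then have "AE x in p. x \<in> B \<longrightarrow> c < \<rho> x"
      by (rule AE_I') (auto simp: space)
    then have gt: "AE x in MB. c < \<rho> x" using AEMB by simp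
    have "(\<integral>\<^sup>+x. c \<partial>MB) < (\<integral>\<^sup>+x. \<rho> x \<partial>MB)"
    proof (rule nn_integral_less[OF _ m2])
      show "(\<lambda>x. c) \<in> borel_measurable MB" by simp
      show "(\<integral>\<^sup>+x. c \<partial>MB) \<noteq> \<infinity>" using IcB finC by simp
      show "AE x in MB. c \<le> \<rho> x" using gt by eventually_elim auto
      show "\<not> (AE x in MB. \<rho> x \<le> c)"
      proof
        assume "AE x in MB. \<rho> x \<le> c"
        with gt have ae: "AE x in MB. False" by eventually_elim auto
        have eqs: "{x\<in>space MB. \<not> False} = space MB" by simp
        have "emeasure MB (space MB) = 0" using AE_iff_measurable[OF sets.top eqs] ae by blast
        moreover have "emeasure MB (space MB) = emeasure p B"
          unfolding spMB unfolding MB_def by (rule em_restr[OF B]) simp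
        ultimately show False using pB by simp
      qed
    qed
    then show ?thesis using IB IcB by simp
  qed
  then have AEc': "AE x in p. x \<in> B \<longrightarrow> \<rho> x = c" using AEMB by simp
  show ?thesis
  proof (intro ballI impI)
    fix A assume A: "A \<in> sets p" "A \<subseteq> B"
    have "emeasure p (\<Phi> ` A) = (\<integral>\<^sup>+x. \<rho> x * indicator A x \<partial>p)" by (rule int[OF A])
    also have "\<dots> = (\<integral>\<^sup>+x. c * indicator A x \<partial>p)"
    proof (rule nn_integral_cong_AE)
      show "AE x in p. \<rho> x * indicator A x = c * indicator A x"
        using AEc'
      proof eventually_elim
        fix x assume "x \<in> B \<longrightarrow> \<rho> x = c"
        then show "\<rho> x * indicator A x = c * indicator A x" using A(2) by (auto split: split_indicator)
      qed
    qed
    also have "\<dots> = c * emeasure p A" using A by (simp add: nn_integral_cmult_indicator)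
    finally show "emeasure p (\<Phi> ` A) = emeasure p C / emeasure p B * emeasure p A" by (simp add: c_def)
  qed
qed

end

lemma pair_cs:
  fixes f :: "'x \<Rightarrow> 'b::countable" and g :: "'x \<Rightarrow> 'c::countable"
  assumes "f \<in> measurable M (count_space UNIV)" "g \<in> measurable M (count_space UNIV)"
  shows "(\<lambda>x. H (f x) (g x) :: 'd::countable) \<in> measurable M (count_space UNIV)"
proof -
  have "(\<lambda>x. (f x, g x)) \<in> measurable M (count_space UNIV \<Otimes>\<^sub>M count_space UNIV)"
    using assms by (rule measurable_Pair)
  then have "(\<lambda>x. (f x, g x)) \<in> measurable M (count_space (UNIV \<times> UNIV))"
    by (simp add: pair_measure_countable)
  then have m: "(\<lambda>x. (f x, g x)) \<in> measurable M (count_space UNIV)" by simp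
  have "(\<lambda>(a, b). H a b) \<in> measurable (count_space UNIV) (count_space UNIV)" by simp
  from measurable_comp[OF m this] show ?thesis by (simp add: comp_def)
qed

context SC
begin

interpretation P: prob_space p by (rule prob)

definition rz where
  "rz \<Phi> \<Phi>i B C h \<longleftrightarrow> bb \<Phi> \<Phi>i B C \<and> (\<forall>x\<in>B. (x, \<Phi> x) \<in> tail_rel X \<and> Psi G x (\<Phi> x) = h)"

lemma rz_parts:
  assumes "rz \<Phi> \<Phi>i B C h"
  shows "B \<in> sets p" "C \<in> sets p" "\<And>x. x \<in> B \<Longrightarrow> \<Phi> x \<in> C" "\<And>x. x \<in> B \<Longrightarrow> \<Phi>i (\<Phi> x) = x"
    "\<And>y. y \<in> C \<Longrightarrow> \<Phi>i y \<in> B" "\<And>y. y \<in> C \<Longrightarrow> \<Phi> (\<Phi>i y) = y"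
    "\<And>x. x \<in> B \<Longrightarrow> (x, \<Phi> x) \<in> tail_rel X" "\<And>x. x \<in> B \<Longrightarrow> Psi G x (\<Phi> x) = h"
    "bb \<Phi> \<Phi>i B C"
proof -
  have b: "bb \<Phi> \<Phi>i B C" and g: "\<forall>x\<in>B. (x, \<Phi> x) \<in> tail_rel X \<and> Psi G x (\<Phi> x) = h"
    using assms by (simp_all add: rz_def)
  have b': "B \<in> sets p \<and> C \<in> sets p \<and> (\<forall>x\<in>B. \<Phi> x \<in> C \<and> \<Phi>i (\<Phi> x) = x) \<and>
     (\<forall>y\<in>C. \<Phi>i y \<in> B \<and> \<Phi> (\<Phi>i y) = y)" using b by (simp add: bb_def)
  show "B \<in> sets p" "C \<in> sets p" using b' by simp_all
  show "\<And>x. x \<in> B \<Longrightarrow> \<Phi> x \<in> C" "\<And>x. x \<in> B \<Longrightarrow> \<Phi>i (\<Phi> x) = x" using b' by simp_all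
  show "\<And>y. y \<in> C \<Longrightarrow> \<Phi>i y \<in> B" "\<And>y. y \<in> C \<Longrightarrow> \<Phi> (\<Phi>i y) = y" using b' by simp_all
  show "\<And>x. x \<in> B \<Longrightarrow> (x, \<Phi> x) \<in> tail_rel X" "\<And>x. x \<in> B \<Longrightarrow> Psi G x (\<Phi> x) = h" using g by simp_all
  show "bb \<Phi> \<Phi>i B C" by (rule b)
qed

lemma rz_inv:
  assumes r: "rz \<Phi> \<Phi>i B C h"
  shows "rz \<Phi>i \<Phi> C B (- h)"
proof -
  have "\<forall>y\<in>C. (y, \<Phi>i y) \<in> tail_rel X \<and> Psi G y (\<Phi>i y) = - h"
  proof
    fix y assume y: "y \<in> C"
    have yB: "\<Phi>i y \<in> B" and yy: "\<Phi> (\<Phi>i y) = y" using rz_parts(5,6)[OF r y] .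
    have t: "(\<Phi>i y, y) \<in> tail_rel X" using rz_parts(7)[OF r yB] yy by simp
    have t2: "Psi G (\<Phi>i y) y = h" using rz_parts(8)[OF r yB] yy by simp
    show "(y, \<Phi>i y) \<in> tail_rel X \<and> Psi G y (\<Phi>i y) = - h"
      using tail_rel_sym[OF t] Psi_sym[OF t, of G] t2 by simp
  qed
  then show ?thesis using bb_inv[OF rz_parts(9)[OF r]] by (simp add: rz_def)
qed

lemma rz_restrict:
  assumes r: "rz \<Phi> \<Phi>i B C h" and A: "A \<in> sets p" "A \<subseteq> B"
  shows "rz \<Phi> \<Phi>i A (\<Phi> ` A) h"
proof -
  have b: "bb \<Phi> \<Phi>i B C" and g: "\<forall>x\<in>B. (x, \<Phi> x) \<in> tail_rel X \<and> Psi G x (\<Phi> x) = h"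
    using r by (simp_all add: rz_def)
  have "bb \<Phi> \<Phi>i A (\<Phi> ` A)" by (rule bb_restrict[OF b A])
  moreover have "\<forall>x\<in>A. (x, \<Phi> x) \<in> tail_rel X \<and> Psi G x (\<Phi> x) = h" using g A(2) by blast
  ultimately show ?thesis by (simp add: rz_def)
qed

lemma rz_comp:
  assumes r1: "rz \<Phi> \<Phi>i B C h" and r2: "rz \<Psi>' \<Psi>i C D k"
  shows "rz (\<Psi>' \<circ> \<Phi>) (\<Phi>i \<circ> \<Psi>i) B D (h + k)"
proof -
  have b1: "bb \<Phi> \<Phi>i B C" and g1: "\<forall>x\<in>B. (x, \<Phi> x) \<in> tail_rel X \<and> Psi G x (\<Phi> x) = h"
    using r1 by (simp_all add: rz_def)
  have b2: "bb \<Psi>' \<Psi>i C D" and g2: "\<forall>x\<in>C. (x, \<Psi>' x) \<in> tail_rel X \<and> Psi G x (\<Psi>' x) = k"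
    using r2 by (simp_all add: rz_def)
  have "\<forall>x\<in>B. (x, (\<Psi>' \<circ> \<Phi>) x) \<in> tail_rel X \<and> Psi G x ((\<Psi>' \<circ> \<Phi>) x) = h + k"
  proof
    fix x assume x: "x \<in> B"
    have y: "\<Phi> x \<in> C" using b1 x by (simp add: bb_def)
    have a1: "(x, \<Phi> x) \<in> tail_rel X" "Psi G x (\<Phi> x) = h" using g1 x by blast+
    have a2: "(\<Phi> x, \<Psi>' (\<Phi> x)) \<in> tail_rel X" "Psi G (\<Phi> x) (\<Psi>' (\<Phi> x)) = k" using g2 y by blast+
    have "(x, \<Psi>' (\<Phi> x)) \<in> tail_rel X \<and> Psi G x (\<Psi>' (\<Phi> x)) = Psi G x (\<Phi> x) + Psi G (\<Phi> x) (\<Psi>' (\<Phi> x))"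
      by (rule comp_graph[OF a1(1) a2(1)])
    then show "(x, (\<Psi>' \<circ> \<Phi>) x) \<in> tail_rel X \<and> Psi G x ((\<Psi>' \<circ> \<Phi>) x) = h + k"
      using a1(2) a2(2) by simp
  qed
  then show ?thesis using bb_comp[OF b1 b2] by (simp add: rz_def)
qed

lemma rz0: "rz \<theta> \<theta>i S S' 0 \<longleftrightarrow> bb \<theta> \<theta>i S S' \<and> (\<forall>x\<in>S. (x, \<theta> x) \<in> tail_rel_Psi X G)"
proof -
  have e: "((x, y) \<in> tail_rel_Psi X G) = ((x, y) \<in> tail_rel X \<and> Psi G x y = 0)" for x y
    unfolding tail_rel_Psi_def by (rule iffI) auto
  show ?thesis unfolding rz_def e by (rule refl)
qed

lemma rz_bb: "rz \<Phi> \<Phi>i B C h \<Longrightarrow> bb \<Phi> \<Phi>i B C"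
  by (simp add: rz_def)

lemma rz_const:
  assumes r: "rz \<Phi> \<Phi>i B C h" and pB: "emeasure p B \<noteq> 0"
  shows "\<forall>A\<in>sets p. A \<subseteq> B \<longrightarrow> emeasure p (\<Phi> ` A) = emeasure p C / emeasure p B * emeasure p A"
proof -
  have b: "bb \<Phi> \<Phi>i B C" and g: "\<forall>x\<in>B. (x, \<Phi> x) \<in> tail_rel X \<and> Psi G x (\<Phi> x) = h"
    using r by (simp_all add: rz_def)
  have g1: "\<forall>x\<in>B. (x, \<Phi> x) \<in> tail_rel X" and g2: "\<forall>x\<in>B. Psi G x (\<Phi> x) = h" using g by blast+
  show ?thesis by (rule const[OF b g1 g2 pB])
qed

lemma rz_ns:
  assumes r: "rz \<Phi> \<Phi>i B C h" and A: "A \<in> sets p" "A \<subseteq> B" "emeasure p A = 0"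
  shows "emeasure p (\<Phi> ` A) = 0"
proof -
  have b: "bb \<Phi> \<Phi>i B C" and g: "\<forall>x\<in>B. (x, \<Phi> x) \<in> tail_rel X \<and> Psi G x (\<Phi> x) = h"
    using r by (simp_all add: rz_def)
  have g1: "\<forall>x\<in>B. (x, \<Phi> x) \<in> tail_rel X" using g by blast
  show ?thesis by (rule ns_img[OF b g1 A])
qed

lemma rz_img_inv:
  assumes r: "rz \<Phi> \<Phi>i B C h" and A: "A \<subseteq> B"
  shows "\<Phi>i ` (\<Phi> ` A) = A"
proof -
  have "\<Phi>i (\<Phi> x) = x" if "x \<in> A" for x using rz_parts(4)[OF r] A that by blast
  then show ?thesis by (simp add: image_image)
qed

lemma rz_img_sub:
  assumes r: "rz \<Phi> \<Phi>i B C h" and A: "A \<subseteq> B"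
  shows "\<Phi> ` A \<subseteq> C"
  using rz_parts(3)[OF r] A by blast

lemma rz_sets: "rz \<Phi> \<Phi>i B C h \<Longrightarrow> B \<in> sets p \<and> C \<in> sets p"
  using rz_parts(1,2) by blast

lemma rz_img_sets:
  assumes r: "rz \<Phi> \<Phi>i B C h" and A: "A \<in> sets p" "A \<subseteq> B"
  shows "\<Phi> ` A \<in> sets p"
proof -
  have b: "bb \<Phi> \<Phi>i B C" using r by (simp add: rz_def)
  show ?thesis by (rule bb_img(2)[OF b A])
qed

lemma rz_full:
  assumes r: "rz \<Phi> \<Phi>i B C h"
  shows "\<Phi> ` B = C"
proof
  show "\<Phi> ` B \<subseteq> C" using rz_parts(3)[OF r] by blast
  show "C \<subseteq> \<Phi> ` B"
  proof
    fix y assume "y \<in> C"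
    then have "\<Phi>i y \<in> B" "\<Phi> (\<Phi>i y) = y" using rz_parts(5,6)[OF r] by blast+
    then show "y \<in> \<Phi> ` B" by (metis image_eqI)
  qed
qed

lemma fin: "emeasure p A \<noteq> \<infinity>"
  by (simp add: P.emeasure_finite)

lemma rz_C_pos:
  assumes r: "rz \<Phi> \<Phi>i B C h" and pB: "emeasure p B \<noteq> 0"
  shows "emeasure p C \<noteq> 0"
proof
  assume C0: "emeasure p C = 0"
  have ri: "rz \<Phi>i \<Phi> C B (- h)" by (rule rz_inv[OF r])
  have Cs: "C \<in> sets p" using rz_sets[OF r] by simp
  have "emeasure p (\<Phi>i ` C) = 0" by (rule rz_ns[OF ri Cs subset_refl C0])
  moreover have "\<Phi>i ` C = B" by (rule rz_full[OF ri])
  ultimately show False using pB by simp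
qed

lemma same:
  assumes r1: "rz \<Phi>1 \<Phi>1i B1 C1 h" "emeasure p B1 \<noteq> 0"
    and r2: "rz \<Phi>2 \<Phi>2i B2 C2 h" "emeasure p B2 \<noteq> 0"
  shows "emeasure p C1 / emeasure p B1 = emeasure p C2 / emeasure p B2"
proof -
  have B1: "B1 \<in> sets p" and B2: "B2 \<in> sets p" using rz_sets r1 r2 by auto
  obtain \<theta> \<theta>i S where th: "bb \<theta> \<theta>i S (\<theta> ` S)" "S \<subseteq> B1" "\<theta> ` S \<subseteq> B2" "emeasure p S \<noteq> 0"
    "\<forall>x\<in>S. (x, \<theta> x) \<in> tail_rel_Psi X G"
    using connect[OF B1 r1(2) B2 r2(2)] by blast
  have rth: "rz \<theta> \<theta>i S (\<theta> ` S) 0" using th by (simp add: rz0)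
  have S: "S \<in> sets p" and thS: "\<theta> ` S \<in> sets p" using th(1) by (auto simp: bb_def)
  define S1 where "S1 = \<Phi>1 ` S"
  have S1: "S1 \<in> sets p" "S1 \<subseteq> C1" unfolding S1_def
    using rz_img_sets[OF r1(1) S th(2)] rz_img_sub[OF r1(1) th(2)] by auto
  have ra: "rz \<Phi>1i \<Phi>1 S1 S (- h)"
    using rz_restrict[OF rz_inv[OF r1(1)] S1] rz_img_inv[OF r1(1) th(2)] by (simp add: S1_def)
  have rb: "rz \<Phi>2 \<Phi>2i (\<theta> ` S) (\<Phi>2 ` \<theta> ` S) h" by (rule rz_restrict[OF r2(1) thS th(3)])
  have rX: "rz (\<Phi>2 \<circ> (\<theta> \<circ> \<Phi>1i)) ((\<Phi>1 \<circ> \<theta>i) \<circ> \<Phi>2i) S1 (\<Phi>2 ` \<theta> ` S) (- h + 0 + h)"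
    by (rule rz_comp[OF rz_comp[OF ra rth] rb])
  then have rX0: "rz (\<Phi>2 \<circ> (\<theta> \<circ> \<Phi>1i)) ((\<Phi>1 \<circ> \<theta>i) \<circ> \<Phi>2i) S1 (\<Phi>2 ` \<theta> ` S) 0" by simp
  have e1: "emeasure p (\<Phi>2 ` \<theta> ` S) = emeasure p S1"
    using inv_img[of "\<Phi>2 \<circ> (\<theta> \<circ> \<Phi>1i)" _ S1 _ S1] rX0 rz_full[OF rX0] S1 by (auto simp: rz0)
  have e2: "emeasure p (\<theta> ` S) = emeasure p S" using inv_img[OF th(1) th(5) S] by simp
  have c1: "emeasure p S1 = emeasure p C1 / emeasure p B1 * emeasure p S"
    using rz_const[OF r1] S th(2) by (simp add: S1_def)
  have c2: "emeasure p (\<Phi>2 ` \<theta> ` S) = emeasure p C2 / emeasure p B2 * emeasure p S"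
    using rz_const[OF r2] thS th(3) e2 by simp
  have "emeasure p S * (emeasure p C1 / emeasure p B1) = emeasure p S * (emeasure p C2 / emeasure p B2)"
    using c1 c2 e1 by (simp add: mult.commute)
  then show ?thesis using th(4) fin[of S] by (simp add: ennreal_mult_cancel_left)
qed

definition realized where
  "realized h \<longleftrightarrow> (\<exists>\<Phi> \<Phi>i B C. rz \<Phi> \<Phi>i B C h \<and> emeasure p B \<noteq> 0)"

definition cc where
  "cc h = (SOME c. \<exists>\<Phi> \<Phi>i B C. rz \<Phi> \<Phi>i B C h \<and> emeasure p B \<noteq> 0 \<and> c = emeasure p C / emeasure p B)"

lemma cc_eq:
  assumes r: "rz \<Phi> \<Phi>i B C h" and pB: "emeasure p B \<noteq> 0"
  shows "cc h = emeasure p C / emeasure p B"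
proof -
  let ?P = "\<lambda>c. \<exists>\<Phi> \<Phi>i B C. rz \<Phi> \<Phi>i B C h \<and> emeasure p B \<noteq> 0 \<and> c = emeasure p C / emeasure p B"
  have ex: "?P (emeasure p C / emeasure p B)" using r pB by blast
  have "?P (cc h)" unfolding cc_def by (rule someI[of ?P, OF ex])
  then obtain \<Phi>' \<Phi>i' B' C' where
    o: "rz \<Phi>' \<Phi>i' B' C' h" "emeasure p B' \<noteq> 0" "cc h = emeasure p C' / emeasure p B'"
    by (elim exE conjE)
  have "emeasure p C / emeasure p B = emeasure p C' / emeasure p B'" by (rule same[OF r pB o(1,2)])
  then show ?thesis using o(3) by simp
qed

lemma cc_prop:
  assumes r: "rz \<Phi> \<Phi>i B C h" and A: "A \<in> sets p" "A \<subseteq> B"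
  shows "emeasure p (\<Phi> ` A) = cc h * emeasure p A"
proof (cases "emeasure p B = 0")
  case True
  have Bs: "B \<in> sets p" using rz_sets[OF r] by simp
  have "emeasure p A \<le> emeasure p B" by (rule emeasure_mono[OF A(2) Bs])
  then have A0: "emeasure p A = 0" using True by simp
  have "emeasure p (\<Phi> ` A) = 0" by (rule rz_ns[OF r A A0])
  then show ?thesis using A0 by simp
next
  case False
  have "emeasure p (\<Phi> ` A) = emeasure p C / emeasure p B * emeasure p A"
    using rz_const[OF r False] A by blast
  then show ?thesis using cc_eq[OF r False] by simp
qed

lemma cc_pos: "realized h \<Longrightarrow> cc h \<noteq> 0 \<and> cc h \<noteq> \<infinity>"
proof -
  assume "realized h"
  then obtain \<Phi> \<Phi>i B C where r: "rz \<Phi> \<Phi>i B C h" "emeasure p B \<noteq> 0" by (auto simp: realized_def)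
  have "emeasure p C \<noteq> 0" by (rule rz_C_pos[OF r])
  then show ?thesis using cc_eq[OF r] r(2) fin[of C] fin[of B]
    by (simp add: ennreal_divide_eq_0_iff ennreal_divide_eq_top_iff)
qed

lemma realized_0: "realized 0"
proof -
  have mid: "id \<in> measurable (restrict_space p X) p"
    by (rule measurable_restrict_space1) (simp add: measurable_ident)
  have "bb id id X X" unfolding bb_def using X_sets mid by simp
  moreover have "\<forall>x\<in>X. (x, id x) \<in> tail_rel X \<and> Psi G x (id x) = 0"
    by (auto simp: tail_rel_refl Psi_self)
  moreover have "emeasure p X \<noteq> 0" using P.emeasure_space_1 by (simp add: space)
  ultimately show ?thesis unfolding realized_def rz_def by blast
qed

lemma realized_neg: "realized h \<Longrightarrow> realized (- h)"
proof -
  assume "realized h"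
  then obtain \<Phi> \<Phi>i B C where r: "rz \<Phi> \<Phi>i B C h" "emeasure p B \<noteq> 0" by (auto simp: realized_def)
  show ?thesis unfolding realized_def using rz_inv[OF r(1)] rz_C_pos[OF r] by blast
qed

lemma realized_add:
  assumes "realized h" "realized k"
  shows "realized (h + k) \<and> cc (h + k) = cc h * cc k"
proof -
  obtain \<Phi> \<Phi>i B C where r: "rz \<Phi> \<Phi>i B C h" "emeasure p B \<noteq> 0" using assms(1) by (auto simp: realized_def)
  obtain \<Phi>' \<Phi>i' B' C' where r': "rz \<Phi>' \<Phi>i' B' C' k" "emeasure p B' \<noteq> 0" using assms(2) by (auto simp: realized_def)
  have C: "C \<in> sets p" and B': "B' \<in> sets p" using rz_sets r r' by auto
  obtain \<theta> \<theta>i S where th: "bb \<theta> \<theta>i S (\<theta> ` S)" "S \<subseteq> C" "\<theta> ` S \<subseteq> B'" "emeasure p S \<noteq> 0"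
    "\<forall>x\<in>S. (x, \<theta> x) \<in> tail_rel_Psi X G"
    using connect[OF C rz_C_pos[OF r] B' r'(2)] by blast
  have rth: "rz \<theta> \<theta>i S (\<theta> ` S) 0" using th by (simp add: rz0)
  have S: "S \<in> sets p" and thS: "\<theta> ` S \<in> sets p" using th(1) by (auto simp: bb_def)
  have ri: "rz \<Phi>i \<Phi> C B (- h)" by (rule rz_inv[OF r(1)])
  define A0 where "A0 = \<Phi>i ` S"
  have A0: "A0 \<in> sets p" "A0 \<subseteq> B" unfolding A0_def
    using rz_img_sets[OF ri S th(2)] rz_img_sub[OF ri th(2)] by auto
  have img0: "\<Phi> ` A0 = S" unfolding A0_def by (rule rz_img_inv[OF ri th(2)])
  have ra: "rz \<Phi> \<Phi>i A0 S h" using rz_restrict[OF r(1) A0] img0 by simp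
  have rb: "rz \<Phi>' \<Phi>i' (\<theta> ` S) (\<Phi>' ` \<theta> ` S) k" by (rule rz_restrict[OF r'(1) thS th(3)])
  have rX: "rz (\<Phi>' \<circ> (\<theta> \<circ> \<Phi>)) ((\<Phi>i \<circ> \<theta>i) \<circ> \<Phi>i') A0 (\<Phi>' ` \<theta> ` S) (h + 0 + k)"
    by (rule rz_comp[OF rz_comp[OF ra rth] rb])
  then have rX': "rz (\<Phi>' \<circ> (\<theta> \<circ> \<Phi>)) ((\<Phi>i \<circ> \<theta>i) \<circ> \<Phi>i') A0 (\<Phi>' ` \<theta> ` S) (h + k)" by simp
  have A0pos: "emeasure p A0 \<noteq> 0"
  proof
    assume "emeasure p A0 = 0"
    then have "emeasure p (\<Phi> ` A0) = 0" using rz_ns[OF r(1) A0] by simp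
    then show False using img0 th(4) by simp
  qed
  have real: "realized (h + k)" unfolding realized_def using rX' A0pos by blast
  have e1: "emeasure p (\<Phi>' ` \<theta> ` S) = cc (h + k) * emeasure p A0"
    using cc_prop[OF rX' A0(1)] rz_full[OF rX'] by simp
  have e2: "emeasure p (\<Phi>' ` \<theta> ` S) = cc k * emeasure p (\<theta> ` S)"
    using cc_prop[OF r'(1) thS th(3)] .
  have e3: "emeasure p (\<theta> ` S) = emeasure p S" using inv_img[OF th(1) th(5) S] by simp
  have e4: "emeasure p S = cc h * emeasure p A0" using cc_prop[OF r(1) A0] img0 by simp
  have "emeasure p A0 * cc (h + k) = emeasure p A0 * (cc h * cc k)"
    using e1 e2 e3 e4 by (simp add: mult.commute mult.left_commute)
  then have "cc (h + k) = cc h * cc k" using A0pos fin[of A0] by (simp add: ennreal_mult_cancel_left)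
  then show ?thesis using real by simp
qed

definition Rz where "Rz = {h. realized h}"

definition phi where "phi h = ln (enn2real (cc h))"

lemma sg_Rz: "sg Rz"
  unfolding sg_def Rz_def using realized_0 realized_neg realized_add by auto

lemma cc_exp: "h \<in> Rz \<Longrightarrow> ennreal (exp (phi h)) = cc h"
proof -
  assume "h \<in> Rz"
  then have c: "cc h \<noteq> 0" "cc h \<noteq> \<infinity>" using cc_pos by (auto simp: Rz_def)
  then have "enn2real (cc h) > 0" by (simp add: enn2real_positive_iff top.not_eq_extremum zero_less_iff_neq_zero)
  moreover have "ennreal (enn2real (cc h)) = cc h" using c(2) by (simp add: ennreal_enn2real top.not_eq_extremum)
  ultimately show ?thesis by (simp add: phi_def)
qed

lemma addh_phi: "addh phi Rz"
  unfolding addh_def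
proof (intro ballI)
  fix a b assume a: "a \<in> Rz" and b: "b \<in> Rz"
  have ca: "cc a \<noteq> 0" "cc a \<noteq> \<infinity>" and cb: "cc b \<noteq> 0" "cc b \<noteq> \<infinity>" using cc_pos a b by (auto simp: Rz_def)
  have pa: "enn2real (cc a) > 0" and pb: "enn2real (cc b) > 0"
    using ca cb by (simp_all add: enn2real_positive_iff top.not_eq_extremum zero_less_iff_neq_zero)
  have "cc (a + b) = cc a * cc b" using realized_add a b by (auto simp: Rz_def)
  then have "enn2real (cc (a + b)) = enn2real (cc a) * enn2real (cc b)" by (simp add: enn2real_mult)
  then show "phi (a + b) = phi a + phi b" using pa pb by (simp add: phi_def ln_mult)
qed

end

context SC
begin

interpretation P: prob_space p by (rule prob)

lemma cs_pred: "(\<lambda>x. P x :: bool) \<in> measurable M (count_space UNIV) \<Longrightarrow> {x\<in>space M. P x} \<in> sets M"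
proof -
  assume m: "(\<lambda>x. P x :: bool) \<in> measurable M (count_space UNIV)"
  have "(\<lambda>x. P x) -` {True} \<inter> space M \<in> sets M" by (rule measurable_sets[OF m]) simp
  moreover have "(\<lambda>x. P x) -` {True} \<inter> space M = {x\<in>space M. P x}" by auto
  ultimately show ?thesis by simp
qed

lemma sum_cs:
  fixes u :: "'g \<Rightarrow> ('g \<Rightarrow> 's) \<Rightarrow> 'a"
  assumes "finite F" "\<And>j. (\<lambda>x. u j x) \<in> measurable M (count_space UNIV)"
  shows "(\<lambda>x. \<Sum>j\<in>F. u j x) \<in> measurable M (count_space UNIV)"
  using assms(1)
proof (induction F rule: finite_induct)
  case empty then show ?case by simp
next
  case (insert a F)
  have "(\<lambda>x. u a x + (\<Sum>j\<in>F. u j x)) \<in> measurable M (count_space UNIV)"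
    by (rule pair_cs[OF assms(2) insert(3), where H="\<lambda>s t. s + t"])
  then show ?case using insert(1,2) by simp
qed

lemma psi_meas:
  assumes b: "bb \<Phi> \<Phi>i B C" and gr: "\<forall>x\<in>B. (x, \<Phi> x) \<in> tail_rel X"
  shows "(\<lambda>x. Psi G x (\<Phi> x)) \<in> measurable (restrict_space p B) (count_space UNIV)"
proof -
  define MB where "MB = restrict_space p B"
  have Bs: "B \<in> sets p" using b by (simp add: bb_def)
  have sp: "space MB = B" unfolding MB_def by (rule space_restr[OF Bs])
  have mPhi: "\<Phi> \<in> measurable MB p" using b by (simp add: bb_def MB_def)
  have c1: "(\<lambda>x. x j) \<in> measurable MB (count_space UNIV)" for j
    unfolding MB_def by (rule measurable_restrict_space1[OF coord_measurable])
  have c2: "(\<lambda>x. \<Phi> x j) \<in> measurable MB (count_space UNIV)" for j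
    using measurable_comp[OF mPhi coord_measurable[of j]] by (simp add: comp_def)
  have P1: "{x\<in>space MB. \<forall>j\<in>UNIV. (x j \<noteq> \<Phi> x j) = (j \<in> F)} \<in> sets MB" for F
  proof (rule sets.sets_Collect_countable_All')
    fix j
    show "{x\<in>space MB. (x j \<noteq> \<Phi> x j) = (j \<in> F)} \<in> sets MB"
      by (rule cs_pred) (rule pair_cs[OF c1 c2, where H="\<lambda>s t. (s \<noteq> t) = (j \<in> F)"])
  qed simp
  have P2: "{x\<in>space MB. (\<Sum>j\<in>F. G (\<Phi> x j) - G (x j)) = h} \<in> sets MB" if "finite F" for F h
  proof (rule cs_pred)
    have "(\<lambda>x. \<Sum>j\<in>F. G (\<Phi> x j) - G (x j)) \<in> measurable MB (count_space UNIV)"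
      by (rule sum_cs[OF that]) (rule pair_cs[OF c2 c1, where H="\<lambda>s t. G s - G t"])
    then show "(\<lambda>x. (\<Sum>j\<in>F. G (\<Phi> x j) - G (x j)) = h) \<in> measurable MB (count_space UNIV)"
      by (rule pair_cs[OF _ measurable_const, where H="\<lambda>s t. s = t"]) simp
  qed
  have fib: "(\<lambda>x. Psi G x (\<Phi> x)) -` {h} \<inter> space MB =
    (\<Union>F\<in>{F. finite F}. {x\<in>space MB. \<forall>j\<in>UNIV. (x j \<noteq> \<Phi> x j) = (j \<in> F)} \<inter>
                         {x\<in>space MB. (\<Sum>j\<in>F. G (\<Phi> x j) - G (x j)) = h})" for h
  proof (rule set_eqI, rule iffI)
    fix x assume x: "x \<in> (\<lambda>x. Psi G x (\<Phi> x)) -` {h} \<inter> space MB"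
    define F where "F = {j. x j \<noteq> \<Phi> x j}"
    have "x \<in> B" using x sp by simp
    then have fF: "finite F" unfolding F_def using gr tail_rel_finite by blast
    have "Psi G x (\<Phi> x) = (\<Sum>j\<in>F. G (\<Phi> x j) - G (x j))" by (simp add: Psi_def F_def)
    then show "x \<in> (\<Union>F\<in>{F. finite F}. {x\<in>space MB. \<forall>j\<in>UNIV. (x j \<noteq> \<Phi> x j) = (j \<in> F)} \<inter>
                         {x\<in>space MB. (\<Sum>j\<in>F. G (\<Phi> x j) - G (x j)) = h})"
      using x fF by (auto simp: F_def)
  next
    fix x assume "x \<in> (\<Union>F\<in>{F. finite F}. {x\<in>space MB. \<forall>j\<in>UNIV. (x j \<noteq> \<Phi> x j) = (j \<in> F)} \<inter>
                         {x\<in>space MB. (\<Sum>j\<in>F. G (\<Phi> x j) - G (x j)) = h})"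
    then obtain F where F: "finite F" "x \<in> space MB" "\<forall>j. (x j \<noteq> \<Phi> x j) = (j \<in> F)"
      "(\<Sum>j\<in>F. G (\<Phi> x j) - G (x j)) = h" by blast
    have "{j. x j \<noteq> \<Phi> x j} = F" using F(3) by blast
    then have "Psi G x (\<Phi> x) = h" using F(4) by (simp add: Psi_def)
    then show "x \<in> (\<lambda>x. Psi G x (\<Phi> x)) -` {h} \<inter> space MB" using F(2) by simp
  qed
  have "(\<lambda>x. Psi G x (\<Phi> x)) \<in> measurable MB (count_space UNIV)"
  proof (subst measurable_count_space_eq_countable, simp, intro conjI ballI)
    fix h :: 'a
    show "(\<lambda>x. Psi G x (\<Phi> x)) -` {h} \<inter> space MB \<in> sets MB"
      unfolding fib by (intro sets.countable_UN'' countable_Collect_finite sets.Int P1 P2) auto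
  qed simp
  then show ?thesis by (simp add: MB_def)
qed

lemma main_eq:
  fixes f :: "'a \<Rightarrow> real"
  assumes b: "bb \<Phi> \<Phi>i B C" and gr: "\<forall>x\<in>B. (x, \<Phi> x) \<in> tail_rel X"
    and A: "A \<in> sets p" "A \<subseteq> B"
    and fR: "\<forall>h\<in>Rz. f h = phi h"
    and psig: "\<And>x y. (x, y) \<in> tail_rel X \<Longrightarrow> Psi g x y = f (Psi G x y)"
  shows "emeasure p (\<Phi> ` A) = (\<integral>\<^sup>+x\<in>A. ennreal (exp (Psi g x (\<Phi> x))) \<partial>p)"
proof -
  have Bs: "B \<in> sets p" using b by (simp add: bb_def)
  define ps where "ps x = Psi G x (\<Phi> x)" for x
  have psm: "ps \<in> measurable (restrict_space p B) (count_space UNIV)"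
    unfolding ps_def by (rule psi_meas[OF b gr])
  define Ah where "Ah h = {x\<in>A. ps x = h}" for h
  have Ah_sets: "Ah h \<in> sets p" for h
  proof -
    have "ps -` {h} \<inter> space (restrict_space p B) \<in> sets (restrict_space p B)"
      by (rule measurable_sets[OF psm]) simp
    then have "{x\<in>B. ps x = h} \<in> sets p" using Bs by (auto simp: sets_restr space_restr vimage_def Int_def conj_commute)
    moreover have "Ah h = A \<inter> {x\<in>B. ps x = h}" using A(2) by (auto simp: Ah_def)
    ultimately show ?thesis using A(1) by auto
  qed
  have Ah_sub: "Ah h \<subseteq> B" for h using A(2) by (auto simp: Ah_def)
  have disj: "disjoint_family Ah" unfolding disjoint_family_on_def Ah_def by auto
  have Aun: "A = (\<Union>h. Ah h)" by (auto simp: Ah_def)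
  have rzA: "rz \<Phi> \<Phi>i (Ah h) (\<Phi> ` Ah h) h" for h
  proof -
    have "bb \<Phi> \<Phi>i (Ah h) (\<Phi> ` Ah h)" by (rule bb_restrict[OF b Ah_sets Ah_sub])
    moreover have "\<forall>x\<in>Ah h. (x, \<Phi> x) \<in> tail_rel X \<and> Psi G x (\<Phi> x) = h"
      using gr Ah_sub by (auto simp: Ah_def ps_def)
    ultimately show ?thesis by (simp add: rz_def)
  qed
  have inj: "inj_on \<Phi> B" using b unfolding bb_def by (metis inj_onI)
  have disj2: "disjoint_family (\<lambda>h. \<Phi> ` Ah h)"
    unfolding disjoint_family_on_def
  proof (intro ballI impI)
    fix h k :: 'a assume "h \<noteq> k"
    then have "Ah h \<inter> Ah k = {}" using disj by (auto simp: disjoint_family_on_def)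
    then show "\<Phi> ` Ah h \<inter> \<Phi> ` Ah k = {}"
    proof (rule contrapos_pp)
      assume "\<Phi> ` Ah h \<inter> \<Phi> ` Ah k \<noteq> {}"
      then obtain a b where a: "a \<in> Ah h" "b \<in> Ah k" "\<Phi> a = \<Phi> b" by blast
      then have "a = b" using inj Ah_sub[of h] Ah_sub[of k] by (meson inj_onD subsetD)
      then show "Ah h \<inter> Ah k \<noteq> {}" using a by blast
    qed
  qed
  have img_sets: "\<Phi> ` Ah h \<in> sets p" for h by (rule bb_img(2)[OF b Ah_sets Ah_sub])
  have LHS: "emeasure p (\<Phi> ` A) = (\<integral>\<^sup>+h. emeasure p (\<Phi> ` Ah h) \<partial>count_space UNIV)"
  proof -
    have "\<Phi> ` A = (\<Union>h\<in>UNIV. \<Phi> ` Ah h)" using Aun by auto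
    then show ?thesis using emeasure_UN_countable[of UNIV "\<lambda>h. \<Phi> ` Ah h" p] img_sets disj2 by simp
  qed
  define F' where "F' x = (if x \<in> B then ennreal (exp (f (ps x))) else 0)" for x
  have F'm: "F' \<in> borel_measurable p"
    unfolding F'_def
  proof (subst measurable_If_restrict_space_iff)
    show "{x \<in> space p. x \<in> B} \<in> sets p" using Bs sets_subX[OF Bs] by (simp add: space Collect_mem_eq Int_absorb1 Collect_conj_eq)
    have "(\<lambda>h. ennreal (exp (f h))) \<in> measurable (count_space UNIV) borel" by simp
    from measurable_comp[OF psm this]
    show "(\<lambda>x. ennreal (exp (f (ps x)))) \<in> borel_measurable (restrict_space p {x. x \<in> B}) \<and>
          (\<lambda>x. 0) \<in> borel_measurable (restrict_space p {x. x \<notin> B})"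
      by (simp add: comp_def)
  qed
  have RHS1: "(\<integral>\<^sup>+x\<in>A. ennreal (exp (Psi g x (\<Phi> x))) \<partial>p) = (\<integral>\<^sup>+x. F' x * indicator A x \<partial>p)"
  proof (rule nn_integral_cong)
    fix x
    show "ennreal (exp (Psi g x (\<Phi> x))) * indicator A x = F' x * indicator A x"
    proof (cases "x \<in> A")
      case True
      then have "x \<in> B" using A(2) by auto
      then have "Psi g x (\<Phi> x) = f (ps x)" using psig gr by (simp add: ps_def)
      then show ?thesis using \<open>x \<in> B\<close> True by (simp add: F'_def)
    qed simp
  qed
  have RHS2: "(\<integral>\<^sup>+x. F' x * indicator A x \<partial>p) = emeasure (density p F') A"
    using F'm A(1) by (simp add: emeasure_density)
  have RHS3: "emeasure (density p F') A = (\<integral>\<^sup>+h. emeasure (density p F') (Ah h) \<partial>count_space UNIV)"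
  proof -
    have "A = (\<Union>h\<in>UNIV. Ah h)" using Aun by simp
    then show ?thesis using emeasure_UN_countable[of UNIV Ah "density p F'"] Ah_sets disj by simp
  qed
  have each: "emeasure (density p F') (Ah h) = emeasure p (\<Phi> ` Ah h)" for h
  proof -
    have "emeasure (density p F') (Ah h) = (\<integral>\<^sup>+x. F' x * indicator (Ah h) x \<partial>p)"
      using F'm Ah_sets by (simp add: emeasure_density)
    also have "\<dots> = (\<integral>\<^sup>+x. ennreal (exp (f h)) * indicator (Ah h) x \<partial>p)"
    proof (rule nn_integral_cong)
      fix x show "F' x * indicator (Ah h) x = ennreal (exp (f h)) * indicator (Ah h) x"
        using Ah_sub[of h] by (cases "x \<in> Ah h") (auto simp: F'_def Ah_def)
    qed
    also have "\<dots> = ennreal (exp (f h)) * emeasure p (Ah h)" using Ah_sets by (simp add: nn_integral_cmult_indicator)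
    finally have d: "emeasure (density p F') (Ah h) = ennreal (exp (f h)) * emeasure p (Ah h)" .
    have c: "emeasure p (\<Phi> ` Ah h) = cc h * emeasure p (Ah h)" by (rule cc_prop[OF rzA Ah_sets subset_refl])
    show ?thesis
    proof (cases "emeasure p (Ah h) = 0")
      case True then show ?thesis using d c by simp
    next
      case False
      then have "realized h" unfolding realized_def using rzA by blast
      then have "h \<in> Rz" by (simp add: Rz_def)
      then have "ennreal (exp (f h)) = cc h" using fR cc_exp by simp
      then show ?thesis using d c by simp
    qed
  qed
  show ?thesis unfolding LHS RHS1 RHS2 RHS3 each ..
qed

theorem sc: "site_conformal X p"
proof -
  have finG: "finite (range G)" by simp
  obtain L f where Lf: "sg L" "Rz \<subseteq> L" "range G \<subseteq> L" "addh f L" "\<forall>x\<in>Rz. f x = phi x"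
    using extend_finite[OF sg_Rz addh_phi finG] by blast
  define g where "g = f \<circ> G"
  have psig: "Psi g x y = f (Psi G x y)" if "(x, y) \<in> tail_rel X" for x y
  proof -
    define D where "D = {j. x j \<noteq> y j}"
    have fD: "finite D" using that by (simp add: tail_rel_def D_def)
    have mem: "G (y j) - G (x j) \<in> L" for j using Lf(1,3) by (intro sg_diff) auto
    have "Psi g x y = (\<Sum>j\<in>D. f (G (y j)) - f (G (x j)))" by (simp add: Psi_def D_def g_def)
    also have "\<dots> = (\<Sum>j\<in>D. f (G (y j) - G (x j)))"
    proof (rule sum.cong[OF refl])
      fix j
      have "G (y j) \<in> L" "G (x j) \<in> L" using Lf(3) by auto
      then show "f (G (y j)) - f (G (x j)) = f (G (y j) - G (x j))"
        using addh_diff[OF Lf(1,4)] by simp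
    qed
    also have "\<dots> = f (\<Sum>j\<in>D. G (y j) - G (x j))"
      using addh_sum[OF Lf(1,4) fD, of "\<lambda>j. G (y j) - G (x j)"] mem by simp
    also have "\<dots> = f (Psi G x y)" by (simp add: Psi_def D_def)
    finally show ?thesis .
  qed
  show ?thesis unfolding site_conformal_def
  proof (intro exI[of _ g] conjI allI impI ballI)
    show "nonsingular p (tail_rel X)" by (rule nonsing)
  next
    fix \<Phi> B C A
    assume bbj: "borel_bij p \<Phi> B C" and gr: "\<forall>x\<in>B. (x, \<Phi> x) \<in> tail_rel X"
      and A: "A \<in> sets p" "A \<subseteq> B"
    show "emeasure p (\<Phi> ` A) = (\<integral>\<^sup>+x\<in>A. ennreal (exp (Psi g x (\<Phi> x))) \<partial>p)"
      by (rule main_eq[OF borel_bij_bb[OF bbj] gr A Lf(5) psig])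
  qed
qed

end

theorem mainTheorem10:
  fixes X :: "('g::countable \<Rightarrow> 's::finite) set"
    and G :: "'s \<Rightarrow> 'a::{ab_group_add, countable}"
    and p :: "('g \<Rightarrow> 's) measure"
  assumes X_closed: "closedin conf_top X"
    and H_def: "H = subgroup_generated {Psi G x y | x y. (x, y) \<in> tail_rel X}"
    and transitive: "top_transitive (prod_topology (subtopology conf_top X) (discrete_topology H))
                       (skew_rel X G)"
    and prob: "prob_space p"
    and borel: "sets p = sets (borel_of (subtopology conf_top X))"
    and space: "space p = X"
    and nonsing: "nonsingular p (tail_rel X)"
    and inv: "invariant p (tail_rel_Psi X G)"
    and erg: "ergodic p (tail_rel_Psi X G)"
  shows "site_conformal X p"
proof -
  have "SC X G p" unfolding SC_def using X_closed prob borel space nonsing inv erg by blast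
  then show ?thesis by (rule SC.sc)
qed

end
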